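(* For all $0\le t,s\le1$, the covariance of the limit process $X^\infty=\lim_{N\to\infty}X^N$ is $$C(t,s)=\mathbb{E}\big[X^\infty_t(X^\infty_s)^T\big]=g(t)\,h(0,t\wedge s)\,g(s)^T.$$
   Context: Let $d,m\geq 1$. Let $\alpha:[0,1]\to\mathbb{R}^{d\times d}$, $\sqrt{\Gamma}:[0,1]\to\mathbb{R}^{d\times m}$ be continuous, $\Gamma=\sqrt{\Gamma}\sqrt{\Gamma}^{T}$. Let $F(s,t)$ be the flow ($\partial_tF(s,t)=\alpha(t)F(s,t)$, $F(s,s)=I_d$), $h_u(s,t)=\int_s^t F(w,u)\Gamma(w)F(w,u)^Tdw$, $h=h_0$ (so $h(s,t)=\int_s^tf(w)f(w)^Tdw$ with $f(t)=F(t,0)\sqrt{\Gamma(t)}$), $g(t)=F(0,t)$. Non-degeneracy: $F(u,v)h_u(u,v)F(u,v)^T$ is positive definite for all $0\le u<v\le1$. $\mathcal{I}=\{(0,0)\}\cup\{(n,k):n\ge1,\ 0\le k<2^{n-1}\}$, $\mathcal{I}_N=\{(0,0)\}\cup\{(n,k)\in\mathcal{I}:1\le n\le N\}$. Partition: fix $\rho\in(0,1)$ and reals $l_{n,k}<m_{n,k}<r_{n,k}$ ($n\ge1$) with $l_{1,0}=0$, $r_{1,0}=1$, $l_{n+1,2k}=l_{n,k}$, $r_{n+1,2k}=l_{n+1,2k+1}=m_{n,k}$, $r_{n+1,2k+1}=r_{n,k}$, $\max(r_{n,k}-m_{n,k},m_{n,k}-l_{n,k})<\rho(r_{n,k}-l_{n,k})$.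 Basis: for $n\ge1$ (writing $l,m,r$ for $l_{n,k},m_{n,k},r_{n,k}$), $\Sigma_{n,k}=h_m(l,m)h_m(l,r)^{-1}h_m(m,r)$, $\sigma_{n,k}$ its lower-triangular Cholesky factor with positive diagonal, $L_{n,k}=h(l,m)^{-1}g(m)^{-1}\sigma_{n,k}$, $R_{n,k}=h(m,r)^{-1}g(m)^{-1}\sigma_{n,k}$, $\psi_{n,k}(t)=g(t)h(l,t)L_{n,k}$ on $[l,m]$, $g(t)h(t,r)R_{n,k}$ on $[m,r]$, $0$ elsewhere; $\sigma_{0,0}$ is the lower-triangular Cholesky factor of $g(1)h(0,1)g(1)^T$, $L_{0,0}=h(0,1)^{-1}g(1)^{-1}\sigma_{0,0}$, $\psi_{0,0}(t)=g(t)h(0,t)L_{0,0}$. $(\Xi_{n,k})_{(n,k)\in\mathcal{I}}$ are independent $\mathcal{N}(0,I_d)$ random vectors, $X^N_t=\sum_{(n,k)\in\mathcal{I}_N}\psi_{n,k}(t)\Xi_{n,k}$, and $X^\infty$ denotes the almost sure limit of $X^N$ as $N\to\infty$, which is a continuous Gaussian process. *)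

theory Defs
  imports "HOL-Probability.Probability"
begin


definition Gam :: "(real \<Rightarrow> real^'m^'d) \<Rightarrow> real \<Rightarrow> real^'d^'d" where
  "Gam sG w = sG w ** transpose (sG w)"

definition hu :: "(real \<Rightarrow> real \<Rightarrow> real^'d^'d) \<Rightarrow> (real \<Rightarrow> real^'m^'d)
    \<Rightarrow> real \<Rightarrow> real \<Rightarrow> real \<Rightarrow> real^'d^'d" where
  "hu F sG u s t = integral {s..t} (\<lambda>w. F w u ** Gam sG w ** transpose (F w u))"

definition hh :: "(real \<Rightarrow> real \<Rightarrow> real^'d^'d) \<Rightarrow> (real \<Rightarrow> real^'m^'d)
    \<Rightarrow> real \<Rightarrow> real \<Rightarrow> real^'d^'d" where
  "hh F sG s t = hu F sG 0 s t"

definition gg :: "(real \<Rightarrow> real \<Rightarrow> real^'d^'d) \<Rightarrow> real \<Rightarrow> real^'d^'d" where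
  "gg F t = F 0 t"

definition pos_def_mat :: "real^'d^'d \<Rightarrow> bool" where
  "pos_def_mat A \<longleftrightarrow> (\<forall>x. x \<noteq> 0 \<longrightarrow> x \<bullet> (A *v x) > 0)"

definition is_chol :: "real^('d::{finite,linorder})^('d::{finite,linorder}) \<Rightarrow> real^('d::{finite,linorder})^('d::{finite,linorder}) \<Rightarrow> bool" where
  "is_chol S A \<longleftrightarrow> (\<forall>i j. i < j \<longrightarrow> S $ i $ j = 0) \<and> (\<forall>i. S $ i $ i > 0)
                   \<and> S ** transpose S = A"

definition Sigma_nk :: "(real \<Rightarrow> real \<Rightarrow> real^'d^'d) \<Rightarrow> (real \<Rightarrow> real^'m^'d)
    \<Rightarrow> real \<Rightarrow> real \<Rightarrow> real \<Rightarrow> real^'d^'d" where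
  "Sigma_nk F sG l m r = hu F sG m l m ** matrix_inv (hu F sG m l r) ** hu F sG m m r"

definition idx :: "(nat \<times> nat) set" where
  "idx = {(0,0)} \<union> {(n,k). n \<ge> 1 \<and> k < 2^(n-1)}"

definition idxN :: "nat \<Rightarrow> (nat \<times> nat) set" where
  "idxN N = {(0,0)} \<union> {(n,k). (n,k) \<in> idx \<and> 1 \<le> n \<and> n \<le> N}"

definition psi :: "(real \<Rightarrow> real \<Rightarrow> real^'d^'d) \<Rightarrow> (real \<Rightarrow> real^'m^'d)
    \<Rightarrow> (nat \<Rightarrow> nat \<Rightarrow> real) \<Rightarrow> (nat \<Rightarrow> nat \<Rightarrow> real) \<Rightarrow> (nat \<Rightarrow> nat \<Rightarrow> real)
    \<Rightarrow> (nat \<Rightarrow> nat \<Rightarrow> real^'d^'d) \<Rightarrow> nat \<Rightarrow> nat \<Rightarrow> real \<Rightarrow> real^'d^'d" where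
  "psi F sG l mp r sig n k t =
    (if n = 0 then
       gg F t ** hh F sG 0 t ** (matrix_inv (hh F sG 0 1) ** matrix_inv (gg F 1) ** sig 0 0)
     else if l n k \<le> t \<and> t \<le> mp n k then
       gg F t ** hh F sG (l n k) t **
         (matrix_inv (hh F sG (l n k) (mp n k)) ** matrix_inv (gg F (mp n k)) ** sig n k)
     else if mp n k \<le> t \<and> t \<le> r n k then
       gg F t ** hh F sG t (r n k) **
         (matrix_inv (hh F sG (mp n k) (r n k)) ** matrix_inv (gg F (mp n k)) ** sig n k)
     else 0)"

definition XN :: "(real \<Rightarrow> real \<Rightarrow> real^'d^'d) \<Rightarrow> (real \<Rightarrow> real^'m^'d)
    \<Rightarrow> (nat \<Rightarrow> nat \<Rightarrow> real) \<Rightarrow> (nat \<Rightarrow> nat \<Rightarrow> real) \<Rightarrow> (nat \<Rightarrow> nat \<Rightarrow> real)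
    \<Rightarrow> (nat \<Rightarrow> nat \<Rightarrow> real^'d^'d) \<Rightarrow> (nat \<times> nat \<Rightarrow> 'a \<Rightarrow> real^'d)
    \<Rightarrow> nat \<Rightarrow> real \<Rightarrow> 'a \<Rightarrow> real^'d" where
  "XN F sG l mp r sig Xi N t \<omega> =
     (\<Sum>p\<in>idxN N. psi F sG l mp r sig (fst p) (snd p) t *v Xi p \<omega>)"

definition std_gauss_vec :: "'a measure \<Rightarrow> ('a \<Rightarrow> real^'d) \<Rightarrow> bool" where
  "std_gauss_vec M X \<longleftrightarrow>
     prob_space.indep_vars M (\<lambda>_. borel) (\<lambda>j \<omega>. X \<omega> $ j) UNIV \<and>
     (\<forall>j. distributed M lborel (\<lambda>\<omega>. X \<omega> $ j) (\<lambda>x. ennreal (std_normal_density x)))"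

definition outer :: "real^'d \<Rightarrow> real^'d \<Rightarrow> real^'d^'d" where
  "outer x y = (\<chi> i j. x $ i * y $ j)"

end

theory Submission
  imports Defs
begin

lemma mat_add_rdistrib: "((A::real^'n^'m) + B) ** C = A ** C + B ** C"
  by (simp add: matrix_matrix_mult_def vec_eq_iff sum.distrib distrib_right)
lemma mat_sub_rdistrib: "((A::real^'n^'m) - B) ** C = A ** C - B ** C"
  by (simp add: matrix_matrix_mult_def vec_eq_iff sum_subtractf left_diff_distrib)
lemma mat_sub_ldistrib: "(C::real^'n^'m) ** (A - B) = C ** A - C ** B"
  by (simp add: matrix_matrix_mult_def vec_eq_iff sum_subtractf right_diff_distrib)
lemma mat_zero_mult[simp]: "(0::real^'n^'m) ** A = 0"
  by (simp add: matrix_matrix_mult_def vec_eq_iff)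
lemma mat_mult_zero[simp]: "(A::real^'n^'m) ** 0 = 0"
  by (simp add: matrix_matrix_mult_def vec_eq_iff)
lemma transpose_add: "transpose ((A::real^'n^'m) + B) = transpose A + transpose B"
  by (simp add: transpose_def vec_eq_iff)
lemma transpose_diff: "transpose ((A::real^'n^'m) - B) = transpose A - transpose B"
  by (simp add: transpose_def vec_eq_iff)
lemma transpose_zero[simp]: "transpose (0::real^'n^'m) = 0"
  by (simp add: transpose_def vec_eq_iff)

lemma minv:
  fixes A :: "real^'n^'n"
  assumes "invertible A"
  shows "matrix_inv A ** A = mat 1" "A ** matrix_inv A = mat 1"
proof -
  have "\<exists>A'. A ** A' = mat 1 \<and> A' ** A = mat 1" using assms by (simp add: invertible_def)
  then have "A ** matrix_inv A = mat 1 \<and> matrix_inv A ** A = mat 1"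
    unfolding matrix_inv_def by (rule someI_ex)
  then show "matrix_inv A ** A = mat 1" "A ** matrix_inv A = mat 1" by auto
qed

lemma minv_unique:
  fixes A B :: "real^'n^'n"
  assumes "A ** B = mat 1"
  shows "matrix_inv A = B"
proof -
  have inv: "invertible A" using assms invertible_right_inverse by blast
  have "matrix_inv A = matrix_inv A ** (A ** B)" by (simp add: assms)
  also have "\<dots> = B" by (simp add: matrix_mul_assoc minv[OF inv])
  finally show ?thesis .
qed

lemma minv_invertible: "invertible (A::real^'n^'n) \<Longrightarrow> invertible (matrix_inv A)"
  using minv invertible_right_inverse by blast

lemma minv_minv: "invertible (A::real^'n^'n) \<Longrightarrow> matrix_inv (matrix_inv A) = A"
  by (rule minv_unique) (simp add: minv)

lemma minv_transpose:
  fixes A :: "real^'n^'n"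
  assumes "invertible A"
  shows "matrix_inv (transpose A) = transpose (matrix_inv A)"
  by (rule minv_unique) (metis assms minv(1) matrix_transpose_mul transpose_mat)

lemma minv_mult:
  fixes A B :: "real^'n^'n"
  assumes "invertible A" "invertible B"
  shows "matrix_inv (A ** B) = matrix_inv B ** matrix_inv A"
proof (rule minv_unique)
  have "A ** B ** (matrix_inv B ** matrix_inv A) = A ** (B ** matrix_inv B) ** matrix_inv A"
    by (simp add: matrix_mul_assoc)
  then show "A ** B ** (matrix_inv B ** matrix_inv A) = mat 1" by (simp add: minv assms)
qed

lemma minv_sym:
  fixes A :: "real^'n^'n"
  assumes "invertible A" "transpose A = A"
  shows "transpose (matrix_inv A) = matrix_inv A"
  using minv_transpose[OF assms(1)] assms(2) by simp

lemma invertible_det: "invertible (A::real^'n^'n) \<longleftrightarrow> det A \<noteq> 0"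
  by (rule invertible_det_nz)


lemma mat_row_mult: "((A::real^'n^'m) ** B) $ i = (\<Sum>j\<in>UNIV. A$i$j *\<^sub>R B$j)"
  by (simp add: matrix_matrix_mult_def vec_eq_iff sum_component)

lemma norm_vec_le_l1: "norm (x::('a::real_normed_vector)^'n) \<le> (\<Sum>i\<in>UNIV. norm (x$i))"
  unfolding norm_vec_def by (rule L2_set_le_sum) auto

lemma norm_mat_mult_le:
  fixes A :: "real^'n^'m" and B :: "real^'k^'n"
  shows "norm (A ** B) \<le> (real CARD('m) * real CARD('n) * norm A) * norm B"
proof -
  have "norm (A ** B) \<le> (\<Sum>i\<in>UNIV. norm ((A ** B)$i))" by (rule norm_vec_le_l1)
  also have "\<dots> \<le> (\<Sum>i\<in>(UNIV::'m set). \<Sum>j\<in>(UNIV::'n set). norm A * norm B)"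
  proof (rule sum_mono)
    fix i
    have "norm ((A ** B)$i) \<le> (\<Sum>j\<in>UNIV. norm (A$i$j *\<^sub>R B$j))"
      unfolding mat_row_mult by (rule norm_sum)
    also have "\<dots> \<le> (\<Sum>j\<in>(UNIV::'n set). norm A * norm B)"
    proof (rule sum_mono)
      fix j
      have "\<bar>A$i$j\<bar> \<le> norm A"
        by (meson Finite_Cartesian_Product.norm_nth_le component_le_norm_cart order_trans)
      moreover have "norm (B$j) \<le> norm B" by (rule Finite_Cartesian_Product.norm_nth_le)
      ultimately show "norm (A$i$j *\<^sub>R B$j) \<le> norm A * norm B"
        by (simp add: mult_mono)
    qed
    finally show "norm ((A ** B)$i) \<le> (\<Sum>j\<in>(UNIV::'n set). norm A * norm B)" .
  qed
  also have "\<dots> = (real CARD('m) * real CARD('n) * norm A) * norm B" by simp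
  finally show ?thesis .
qed

lemma ode_unique:
  fixes Y alpha :: "real \<Rightarrow> real^'n^'n"
  assumes ac: "continuous_on {0..1} alpha"
    and der: "\<And>t. t \<in> {0..1} \<Longrightarrow> (Y has_vector_derivative (alpha t ** Y t)) (at t within {0..1})"
    and u: "u \<in> {0..1}" "Y u = 0" and t: "t \<in> {0..1}"
  shows "Y t = 0"
proof -
  obtain B where B: "\<And>x. x \<in> {0..1} \<Longrightarrow> norm (alpha x) \<le> B"
    using compact_imp_bounded[OF compact_continuous_image[OF ac compact_Icc]]
    unfolding bounded_iff by (auto simp del: atLeastAtMost_iff)
  define K where "K = real CARD('n) * real CARD('n) * B"
  have K: "norm (alpha x ** Z) \<le> K * norm Z" if "x \<in> {0..1}" for x Z
  proof -
    have "norm (alpha x ** Z) \<le> (real CARD('n) * real CARD('n) * norm (alpha x)) * norm Z"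
      by (rule norm_mat_mult_le)
    also have "\<dots> \<le> K * norm Z" unfolding K_def
      by (intro mult_right_mono mult_left_mono B that) auto
    finally show ?thesis .
  qed
  have cont: "continuous_on {0..1} Y"
    using der has_vector_derivative_continuous continuous_on_eq_continuous_within by blast
  define phi where "phi x = Y x \<bullet> Y x" for x
  have phicont: "continuous_on {0..1} phi" unfolding phi_def
    by (intro continuous_intros cont)
  have phider: "(phi has_real_derivative (2 * (Y x \<bullet> (alpha x ** Y x)))) (at x)"
    if "0 < x" "x < 1" for x
  proof -
    have d: "(Y has_vector_derivative (alpha x ** Y x)) (at x)"
      using der[of x] that at_within_Icc_at[of 0 x 1] by auto
    have "(phi has_derivative (\<lambda>h. Y x \<bullet> (h *\<^sub>R (alpha x ** Y x)) + (h *\<^sub>R (alpha x ** Y x)) \<bullet> Y x)) (at x)"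
      unfolding phi_def using d unfolding has_vector_derivative_def
      by (intro has_derivative_inner) auto
    moreover have "(\<lambda>h. Y x \<bullet> (h *\<^sub>R (alpha x ** Y x)) + (h *\<^sub>R (alpha x ** Y x)) \<bullet> Y x)
       = (\<lambda>h. (2 * (Y x \<bullet> (alpha x ** Y x))) * h)"
      by (auto simp: inner_commute algebra_simps)
    ultimately show ?thesis unfolding has_field_derivative_def by simp
  qed
  have bnd: "\<bar>Y x \<bullet> (alpha x ** Y x)\<bar> \<le> K * phi x" if "x \<in> {0..1}" for x
  proof -
    have "\<bar>Y x \<bullet> (alpha x ** Y x)\<bar> \<le> norm (Y x) * norm (alpha x ** Y x)"
      by (rule Cauchy_Schwarz_ineq2)
    also have "\<dots> \<le> norm (Y x) * (K * norm (Y x))"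
      by (intro mult_left_mono K that) auto
    also have "\<dots> = K * phi x" by (simp add: phi_def power2_norm_eq_inner[symmetric] power2_eq_square)
    finally show ?thesis .
  qed
  have phinn: "0 \<le> phi x" for x unfolding phi_def by simp
  have phiu: "phi u = 0" using u by (simp add: phi_def)
  have "phi t \<le> 0"
  proof (cases "u \<le> t")
    case True
    define q where "q x = exp (- (2 * K) * x) * phi x" for x
    have "q u \<ge> q t"
    proof (rule DERIV_nonpos_imp_decreasing_open[OF True])
      fix x assume x: "u < x" "x < t"
      then have x01: "0 < x" "x < 1" using u t by auto
      have "(q has_real_derivative (exp (- (2 * K) * x) * (- (2 * K)) * phi x
           + exp (- (2 * K) * x) * (2 * (Y x \<bullet> (alpha x ** Y x))))) (at x)"
        unfolding q_def using phider[OF x01] by (auto intro!: derivative_eq_intros)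
      moreover have "exp (- (2 * K) * x) * (- (2 * K)) * phi x
           + exp (- (2 * K) * x) * (2 * (Y x \<bullet> (alpha x ** Y x))) \<le> 0"
      proof -
        have "Y x \<bullet> (alpha x ** Y x) \<le> K * phi x" using bnd[of x] x01 by auto
        then have "- (2 * K) * phi x + 2 * (Y x \<bullet> (alpha x ** Y x)) \<le> 0" by simp
        then have "exp (- (2 * K) * x) * (- (2 * K) * phi x + 2 * (Y x \<bullet> (alpha x ** Y x))) \<le> 0"
          by (simp add: mult_nonneg_nonpos)
        then show ?thesis by (simp add: algebra_simps)
      qed
      ultimately show "\<exists>y. (q has_real_derivative y) (at x) \<and> y \<le> 0" by blast
    next
      show "continuous_on {u..t} q" unfolding q_def
        by (intro continuous_intros continuous_on_subset[OF phicont]) (use u t in auto)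
    qed
    then have "exp (- (2 * K) * t) * phi t \<le> 0" using phiu by (simp add: q_def)
    then show ?thesis by (simp add: mult_le_0_iff)
  next
    case False
    then have tu: "t \<le> u" by simp
    define q where "q x = exp ((2 * K) * x) * phi x" for x
    have "q t \<le> q u"
    proof (rule DERIV_nonneg_imp_increasing_open[OF tu])
      fix x assume x: "t < x" "x < u"
      then have x01: "0 < x" "x < 1" using u t by auto
      have "(q has_real_derivative (exp ((2 * K) * x) * (2 * K) * phi x
           + exp ((2 * K) * x) * (2 * (Y x \<bullet> (alpha x ** Y x))))) (at x)"
        unfolding q_def using phider[OF x01] by (auto intro!: derivative_eq_intros)
      moreover have "exp ((2 * K) * x) * (2 * K) * phi x
           + exp ((2 * K) * x) * (2 * (Y x \<bullet> (alpha x ** Y x))) \<ge> 0"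
      proof -
        have "- (Y x \<bullet> (alpha x ** Y x)) \<le> K * phi x" using bnd[of x] x01 by auto
        then have "(2 * K) * phi x + 2 * (Y x \<bullet> (alpha x ** Y x)) \<ge> 0" by simp
        then have "exp ((2 * K) * x) * ((2 * K) * phi x + 2 * (Y x \<bullet> (alpha x ** Y x))) \<ge> 0"
          by simp
        then show ?thesis by (simp add: algebra_simps)
      qed
      ultimately show "\<exists>y. (q has_real_derivative y) (at x) \<and> y \<ge> 0" by blast
    next
      show "continuous_on {t..u} q" unfolding q_def
        by (intro continuous_intros continuous_on_subset[OF phicont]) (use u t in auto)
    qed
    then have "exp ((2 * K) * t) * phi t \<le> 0" using phiu by (simp add: q_def)
    then show ?thesis by (simp add: mult_le_0_iff)
  qed
  then have "phi t = 0" using phinn[of t] by simp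
  then show ?thesis by (simp add: phi_def)
qed


lemma bl_rmul: "bounded_linear (\<lambda>X::real^'n^'m. X ** (C::real^'k^'n))"
  unfolding linear_conv_bounded_linear[symmetric]
  by (rule linearI) (simp_all add: mat_add_rdistrib scalar_matrix_assoc)

lemma bl_lmul: "bounded_linear (\<lambda>X::real^'n^'m. (C::real^'m^'k) ** X)"
  unfolding linear_conv_bounded_linear[symmetric]
  by (rule linearI) (simp_all add: matrix_add_ldistrib matrix_scalar_ac scalar_matrix_assoc[symmetric])

lemma bl_transpose: "bounded_linear (\<lambda>X::real^'n^'m. transpose X)"
  unfolding linear_conv_bounded_linear[symmetric]
  by (rule linearI) (simp_all add: transpose_add transpose_scalar)

lemma hvd_rmul:
  assumes "(f has_vector_derivative f') F"
  shows "((\<lambda>x. f x ** (C::real^'k^'n)) has_vector_derivative (f' ** C)) F"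
  using bounded_linear.has_vector_derivative[OF bl_rmul assms] .

lemma continuous_on_det:
  fixes M :: "real \<Rightarrow> real^'n^'n"
  assumes "\<And>i j. continuous_on S (\<lambda>x. M x $ i $ j)"
  shows "continuous_on S (\<lambda>x. det (M x))"
  unfolding det_def
proof (rule continuous_on_sum)
  fix p
  show "continuous_on S (\<lambda>x. of_int (sign p) * (\<Prod>i\<in>UNIV. M x $ i $ p i))"
    by (rule continuous_on_mult[OF continuous_on_const continuous_on_prod]) (rule assms)
qed

locale flow =
  fixes alpha :: "real \<Rightarrow> real^'d^'d" and F :: "real \<Rightarrow> real \<Rightarrow> real^'d^'d"
  assumes alpha_cont: "continuous_on {0..1} alpha"
    and flow_deriv: "\<And>s' t'. s' \<in> {0..1} \<Longrightarrow> t' \<in> {0..1} \<Longrightarrow>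
           ((\<lambda>x. F s' x) has_vector_derivative (alpha t' ** F s' t')) (at t' within {0..1})"
    and flow_init: "\<And>s'. s' \<in> {0..1} \<Longrightarrow> F s' s' = mat 1"
begin

lemma F_semigroup:
  assumes "s \<in> {0..1}" "u \<in> {0..1}" "t \<in> {0..1}"
  shows "F s t = F u t ** F s u"
proof -
  define Y where "Y x = F s x - F u x ** F s u" for x
  have "Y t = 0"
  proof (rule ode_unique[OF alpha_cont _ assms(2) _ assms(3)])
    fix x :: real assume x: "x \<in> {0..1}"
    have "(Y has_vector_derivative (alpha x ** F s x - (alpha x ** F u x) ** F s u)) (at x within {0..1})"
      unfolding Y_def
      by (intro has_vector_derivative_diff flow_deriv hvd_rmul assms x)
    moreover have "alpha x ** F s x - (alpha x ** F u x) ** F s u = alpha x ** Y x"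
      by (simp add: Y_def mat_sub_ldistrib matrix_mul_assoc)
    ultimately show "(Y has_vector_derivative (alpha x ** Y x)) (at x within {0..1})" by simp
  next
    show "Y u = 0" using assms by (simp add: Y_def flow_init)
  qed
  then show ?thesis by (simp add: Y_def)
qed

lemma F_inv:
  assumes "t \<in> {0..1}"
  shows "F t 0 ** F 0 t = mat 1" "F 0 t ** F t 0 = mat 1"
proof -
  have "F 0 0 = F t 0 ** F 0 t" by (rule F_semigroup) (use assms in auto)
  then show "F t 0 ** F 0 t = mat 1" by (simp add: flow_init)
  have "F t t = F 0 t ** F t 0" by (rule F_semigroup) (use assms in auto)
  then show "F 0 t ** F t 0 = mat 1" using flow_init[OF assms] by simp
qed

lemma g_invertible: "t \<in> {0..1} \<Longrightarrow> invertible (F 0 t)"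
  unfolding invertible_def using F_inv by blast

lemma minv_g: "t \<in> {0..1} \<Longrightarrow> matrix_inv (F 0 t) = F t 0"
  by (rule minv_unique) (rule F_inv)

lemma F_cont2: "s \<in> {0..1} \<Longrightarrow> continuous_on {0..1} (F s)"
  unfolding continuous_on_eq_continuous_within
  using flow_deriv has_vector_derivative_continuous by blast

lemma F_cont1: "continuous_on {0..1} (\<lambda>w. F w 0)"
proof -
  have c0: "continuous_on {0..1} (F 0)" by (rule F_cont2) auto
  have eq: "F w 0 $ j $ c = det (\<chi> i j'. if j' = j then (mat 1 :: real^'d^'d) $ i $ c else F 0 w $ i $ j') / det (F 0 w)"
    if w: "w \<in> {0..1}" for w j c
  proof -
    have d: "det (F 0 w) \<noteq> 0" using g_invertible[OF w] invertible_det_nz by blast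
    have "F 0 w *v (\<chi> j. F w 0 $ j $ c) = (\<chi> i. (mat 1 :: real^'d^'d) $ i $ c)"
    proof -
      have "F 0 w *v (\<chi> j. F w 0 $ j $ c) = (\<chi> i. (F 0 w ** F w 0) $ i $ c)"
        by (simp add: matrix_vector_mult_def matrix_matrix_mult_def vec_eq_iff)
      then show ?thesis using F_inv(2)[OF w] by simp
    qed
    from this[unfolded cramer[OF d]]
    have "(\<chi> j. F w 0 $ j $ c) $ j = (\<chi> k. det (\<chi> i j. if j = k then (\<chi> i. (mat 1 :: real^'d^'d) $ i $ c) $ i else F 0 w $ i $ j) / det (F 0 w)) $ j"
      by (rule arg_cong)
    then show ?thesis by (simp only: vec_lambda_beta)
  qed
  have entry: "continuous_on {0..1} (\<lambda>w. F w 0 $ j $ c)" for j c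
  proof (rule continuous_on_eq[OF _ eq[symmetric]])
    show "continuous_on {0..1} (\<lambda>w. det (\<chi> i j'. if j' = j then (mat 1 :: real^'d^'d) $ i $ c else F 0 w $ i $ j') / det (F 0 w))"
    proof (intro continuous_on_divide continuous_on_det)
      fix i j'
      show "continuous_on {0..1} (\<lambda>x. (\<chi> i j'. if j' = j then (mat 1 :: real^'d^'d) $ i $ c else F 0 x $ i $ j') $ i $ j')"
        by (cases "j' = j") (simp_all add: continuous_on_const continuous_on_component c0)
    next
      fix i j show "continuous_on {0..1} (\<lambda>x. F 0 x $ i $ j)" by (intro continuous_on_component c0)
    next
      show "\<forall>x\<in>{0..1}. det (F 0 x) \<noteq> 0" using g_invertible invertible_det_nz by blast
    qed
  qed
  have "continuous_on {0..1} (\<lambda>w. \<chi> j. \<chi> c. F w 0 $ j $ c)"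
    by (intro continuous_on_vec_lambda entry)
  then show ?thesis by simp
qed

end

lemma continuous_on_matmul:
  fixes A :: "real \<Rightarrow> real^'n^'m" and B :: "real \<Rightarrow> real^'k^'n"
  assumes "continuous_on S A" "continuous_on S B"
  shows "continuous_on S (\<lambda>x. A x ** B x)"
proof -
  have "continuous_on S (\<lambda>x. \<chi> i j. \<Sum>k\<in>UNIV. A x $ i $ k * B x $ k $ j)"
    by (intro continuous_on_vec_lambda continuous_on_sum continuous_on_mult continuous_on_component assms)
  then show ?thesis by (simp add: matrix_matrix_mult_def)
qed

lemma continuous_on_transpose:
  fixes A :: "real \<Rightarrow> real^'n^'m"
  assumes "continuous_on S A"
  shows "continuous_on S (\<lambda>x. transpose (A x))"
proof -
  have "continuous_on S (\<lambda>x. \<chi> i j. A x $ j $ i)"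
    by (intro continuous_on_vec_lambda continuous_on_component assms)
  then show ?thesis by (simp add: transpose_def)
qed

lemma dot_mv: "(x::real^'n) \<bullet> ((A::real^'m^'n) *v y) = (transpose A *v x) \<bullet> y"
  by (simp add: dot_lmul_matrix[symmetric])

lemma transpose_mult3: "transpose ((A::real^'n^'m) ** B ** C) = transpose C ** transpose B ** transpose A"
  by (simp add: matrix_transpose_mul matrix_mul_assoc)

lemma bl_quad: "bounded_linear (\<lambda>A::real^'n^'n. x \<bullet> (A *v x))"
  unfolding linear_conv_bounded_linear[symmetric]
proof (rule linearI)
  fix A B :: "real^'n^'n" and c :: real
  show "x \<bullet> ((A + B) *v x) = x \<bullet> (A *v x) + x \<bullet> (B *v x)"
    by (simp add: matrix_vector_mult_add_rdistrib inner_add_right)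
  have "(c *\<^sub>R A) *v x = c *\<^sub>R (A *v x)"
    by (simp add: vec_eq_iff matrix_vector_mult_def sum_distrib_left mult_ac)
  then show "x \<bullet> ((c *\<^sub>R A) *v x) = c *\<^sub>R (x \<bullet> (A *v x))" by simp
qed

lemma bl_conj: "bounded_linear (\<lambda>X::real^'n^'n. (G::real^'n^'n) ** X ** transpose G)"
proof -
  show ?thesis by (rule bounded_linear_compose[OF bl_rmul bl_lmul])
qed

locale gm = flow alpha F for alpha :: "real \<Rightarrow> real^'d^'d" and F +
  fixes sG :: "real \<Rightarrow> real^'m^'d"
  assumes sG_cont: "continuous_on {0..1} sG"
    and nondeg: "\<And>u v. 0 \<le> u \<Longrightarrow> u < v \<Longrightarrow> v \<le> 1 \<Longrightarrow>
           pos_def_mat (F u v ** hu F sG u u v ** transpose (F u v))"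
begin

definition E :: "real \<Rightarrow> real^'d^'d" where
  "E w = F w 0 ** Gam sG w ** transpose (F w 0)"

abbreviation H :: "real \<Rightarrow> real \<Rightarrow> real^'d^'d" where
  "H \<equiv> hh F sG"

lemma H_def: "H a b = integral {a..b} E"
  by (simp add: hh_def hu_def E_def[abs_def])

lemma E_cont: "continuous_on {0..1} E"
  unfolding E_def[abs_def] Gam_def
  by (intro continuous_on_matmul continuous_on_transpose F_cont1 sG_cont)

lemma E_int: "a \<in> {0..1} \<Longrightarrow> b \<in> {0..1} \<Longrightarrow> E integrable_on {a..b}"
  by (rule integrable_continuous_interval, rule continuous_on_subset[OF E_cont]) auto

lemma H_add: "a \<in> {0..1} \<Longrightarrow> c \<in> {0..1} \<Longrightarrow> a \<le> b \<Longrightarrow> b \<le> c \<Longrightarrow> H a c = H a b + H b c"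
  unfolding H_def using Henstock_Kurzweil_Integration.integral_combine[where f=E and a=a and b=c and c=b] E_int[of a c] by auto

lemma H_refl[simp]: "H a a = 0"
  unfolding H_def by simp

lemma E_sym: "transpose (E w) = E w"
  by (simp add: E_def Gam_def transpose_mult3 matrix_transpose_mul matrix_mul_assoc)

lemma H_sym: "a \<in> {0..1} \<Longrightarrow> b \<in> {0..1} \<Longrightarrow> transpose (H a b) = H a b"
  unfolding H_def
  using integral_linear[OF E_int bl_transpose, of a b] by (simp add: o_def E_sym)

lemma E_psd: "0 \<le> x \<bullet> (E w *v x)"
proof -
  have "x \<bullet> (E w *v x) = (transpose (sG w) *v (transpose (F w 0) *v x)) \<bullet> (transpose (sG w) *v (transpose (F w 0) *v x))"
    by (simp add: E_def Gam_def matrix_vector_mul_assoc[symmetric] dot_mv matrix_transpose_mul)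
  then show ?thesis by simp
qed

lemma H_psd: "a \<in> {0..1} \<Longrightarrow> b \<in> {0..1} \<Longrightarrow> 0 \<le> x \<bullet> (H a b *v x)"
proof -
  assume ab: "a \<in> {0..1}" "b \<in> {0..1}"
  have "x \<bullet> (H a b *v x) = integral {a..b} ((\<lambda>A. x \<bullet> (A *v x)) \<circ> E)"
    unfolding H_def by (rule integral_linear[OF E_int[OF ab] bl_quad, symmetric])
  also have "\<dots> \<ge> 0"
    by (rule integral_nonneg) (auto simp: E_psd intro!: integrable_linear[OF E_int[OF ab] bl_quad])
  finally show ?thesis .
qed

lemma hu_eq:
  assumes "m \<in> {0..1}" "a \<in> {0..1}" "b \<in> {0..1}"
  shows "hu F sG m a b = F 0 m ** H a b ** transpose (F 0 m)"
proof -
  have "hu F sG m a b = integral {a..b} ((\<lambda>X. F 0 m ** X ** transpose (F 0 m)) \<circ> E)"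
    unfolding hu_def
  proof (rule integral_cong)
    fix w assume "w \<in> {a..b}"
    then have w: "w \<in> {0..1}" using assms by auto
    have "F w m = F 0 m ** F w 0" using F_semigroup[of w 0 m] w assms by auto
    then show "F w m ** Gam sG w ** transpose (F w m) = ((\<lambda>X. F 0 m ** X ** transpose (F 0 m)) \<circ> E) w"
      by (simp add: E_def matrix_transpose_mul matrix_mul_assoc)
  qed
  also have "\<dots> = F 0 m ** H a b ** transpose (F 0 m)"
    unfolding H_def by (rule integral_linear[OF E_int bl_conj]) (use assms in auto)
  finally show ?thesis .
qed

lemma H_bound: obtains C where "C \<ge> 0" "\<And>a b. a \<in> {0..1} \<Longrightarrow> b \<in> {0..1} \<Longrightarrow> a \<le> b \<Longrightarrow> norm (H a b) \<le> C * (b - a)"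
proof -
  obtain C where C: "\<And>x. x \<in> {0..1} \<Longrightarrow> norm (E x) \<le> C"
    using compact_imp_bounded[OF compact_continuous_image[OF E_cont compact_Icc]]
    unfolding bounded_iff by (auto simp del: atLeastAtMost_iff)
  have C0: "C \<ge> 0" using C[of 0] by (meson atLeastAtMost_iff norm_ge_zero order_trans zero_le_one order_refl)
  show ?thesis
  proof (rule that[OF C0])
    fix a b :: real assume ab: "a \<in> {0..1}" "b \<in> {0..1}" "a \<le> b"
    show "norm (H a b) \<le> C * (b - a)" unfolding H_def
    proof (rule integral_bound[OF ab(3)])
      show "continuous_on {a..b} E" by (rule continuous_on_subset[OF E_cont]) (use ab in auto)
      fix t assume "t \<in> {a..b}" then show "norm (E t) \<le> C" using ab by (intro C) auto
    qed
  qed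
qed

lemma pd_invertible:
  fixes P :: "real^'n^'n"
  assumes "\<And>x. x \<noteq> 0 \<Longrightarrow> x \<bullet> (P *v x) > 0"
  shows "invertible P"
proof -
  have "inj ((*v) P)"
  proof (rule linear_injective_0[THEN iffD2])
    show "linear ((*v) P)" by simp
    show "\<forall>x. P *v x = 0 \<longrightarrow> x = 0" using assms by force
  qed
  then have "det (matrix ((*v) P)) \<noteq> 0" by (subst det_nz_iff_inj) auto
  then show ?thesis by (simp add: invertible_det_nz)
qed

lemma H_inv:
  assumes "0 \<le> u" "u < v" "v \<le> 1"
  shows "invertible (H u v)"
proof -
  have uv: "u \<in> {0..1}" "v \<in> {0..1}" using assms by auto
  have "F u v ** F 0 u = F 0 v" using F_semigroup[of 0 u v] uv by auto
  then have "F u v ** hu F sG u u v ** transpose (F u v) = F 0 v ** H u v ** transpose (F 0 v)"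
    using hu_eq[of u u v] uv
    by (simp add: matrix_mul_assoc matrix_transpose_mul) (metis matrix_mul_assoc matrix_transpose_mul)
  then have "invertible (F 0 v ** H u v ** transpose (F 0 v))"
    using nondeg[OF assms] unfolding pos_def_mat_def by (intro pd_invertible) auto
  then have "det (F 0 v) * det (H u v) * det (F 0 v) \<noteq> 0"
    by (simp add: invertible_det_nz det_mul)
  then show ?thesis by (simp add: invertible_det_nz)
qed

end

lemma idx_iff: "(n,k) \<in> idx \<longleftrightarrow> (n = 0 \<and> k = 0) \<or> (1 \<le> n \<and> k < 2^(n-1))"
  by (auto simp: idx_def)

locale part =
  fixes l mp r :: "nat \<Rightarrow> nat \<Rightarrow> real" and rho :: real
  assumes rho: "0 < rho" "rho < 1"
    and part_init: "l 1 0 = 0" "r 1 0 = 1"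
    and part_order: "\<And>n k. (n,k) \<in> idx \<Longrightarrow> n \<ge> 1 \<Longrightarrow> l n k < mp n k \<and> mp n k < r n k"
    and part_left: "\<And>n k. (n,k) \<in> idx \<Longrightarrow> n \<ge> 1 \<Longrightarrow>
           l (n+1) (2*k) = l n k \<and> r (n+1) (2*k) = mp n k"
    and part_right: "\<And>n k. (n,k) \<in> idx \<Longrightarrow> n \<ge> 1 \<Longrightarrow>
           l (n+1) (2*k+1) = mp n k \<and> r (n+1) (2*k+1) = r n k"
    and part_ratio: "\<And>n k. (n,k) \<in> idx \<Longrightarrow> n \<ge> 1 \<Longrightarrow>
           max (r n k - mp n k) (mp n k - l n k) < rho * (r n k - l n k)"
begin

lemma ord: "1 \<le> n \<Longrightarrow> k < 2^(n-1) \<Longrightarrow> l n k < mp n k \<and> mp n k < r n k"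
  using part_order idx_iff by auto

lemma chain_all: "1 \<le> n \<Longrightarrow> l n 0 = 0 \<and> r n (2^(n-1) - 1) = 1 \<and> (\<forall>k. k+1 < 2^(n-1) \<longrightarrow> r n k = l n (k+1))"
proof (induction n rule: dec_induct)
  case base then show ?case using part_init by simp
next
  case (step n)
  have id: "\<And>k. k < 2^(n-1) \<Longrightarrow> (n,k) \<in> idx" using step by (auto simp: idx_iff)
  have pos: "(0::nat) < 2^(n-1)" by simp
  have "l (n+1) 0 = l n 0" using part_left[OF id[OF pos]] step by simp
  moreover
  have e: "(2::nat)^(Suc n - 1) - 1 = 2 * (2^(n-1) - 1) + 1"
  proof -
    have p: "(1::nat) \<le> 2^(n-1)" by simp
    have "(2::nat)^(Suc n - 1) = 2 * 2^(n-1)" using step(1) by (cases n) auto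
    then show ?thesis using p by linarith
  qed
  have "r (n+1) (2^(Suc n - 1) - 1) = r n (2^(n-1) - 1)"
    unfolding e using part_right[OF id, of "2^(n-1) - 1"] step by simp
  moreover have "r (n+1) j = l (n+1) (j+1)" if j: "j + 1 < 2^(Suc n - 1)" for j
  proof (cases "even j")
    case True
    then obtain k where k: "j = 2*k" by (auto elim: evenE)
    have kk: "k < 2^(n-1)" using j k step(1) by (cases n) auto
    show ?thesis using part_left[OF id[OF kk]] part_right[OF id[OF kk]] step k
      by (simp add: Suc_eq_plus1[symmetric])
  next
    case False
    then obtain k where k: "j = 2*k+1" by (auto elim: oddE)
    have kk: "k + 1 < 2^(n-1)" using j k step(1) by (cases n) auto
    have "r (n+1) j = r n k" using part_right[OF id, of k] kk k step by simp
    also have "\<dots> = l n (k+1)" using step kk by auto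
    also have "\<dots> = l (n+1) (2*(k+1))" using part_left[OF id[OF kk]] step by simp
    finally show ?thesis using k by simp
  qed
  ultimately show ?case using step by simp
qed

lemma chain: "1 \<le> n \<Longrightarrow> k+1 < 2^(n-1) \<Longrightarrow> r n k = l n (k+1)"
  using chain_all by blast

lemma mono_cells: "1 \<le> n \<Longrightarrow> k < k' \<Longrightarrow> k' < 2^(n-1) \<Longrightarrow> r n k \<le> l n k'"
proof (induction k' rule: less_induct)
  case (less k')
  show ?case
  proof (cases "k' = k + 1")
    case True then show ?thesis using chain less.prems by simp
  next
    case False
    then have "k < k' - 1" using less.prems by simp
    then have "r n k \<le> l n (k' - 1)" using less by simp
    also have "\<dots> \<le> r n (k' - 1)"
    proof -
      have "k' - 1 < 2^(n-1)" using less.prems by linarith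
      then show ?thesis using ord[of n "k'-1"] less.prems by (meson less_imp_le order.strict_trans)
    qed
    also have "\<dots> = l n k'" using chain[of n "k'-1"] less.prems by simp
    finally show ?thesis .
  qed
qed

lemma cell_bounds: "1 \<le> n \<Longrightarrow> k < 2^(n-1) \<Longrightarrow> 0 \<le> l n k \<and> r n k \<le> 1"
proof -
  assume n: "1 \<le> n" and k: "k < 2^(n-1)"
  have "0 \<le> l n k"
  proof (cases "k = 0")
    case True then show ?thesis using chain_all[OF n] by simp
  next
    case False
    then have "r n 0 \<le> l n k" using mono_cells[OF n _ k] by simp
    moreover have "l n 0 \<le> r n 0" using ord[OF n, of 0] by simp
    ultimately show ?thesis using chain_all[OF n] by simp
  qed
  moreover have "r n k \<le> 1"
  proof (cases "k = 2^(n-1) - 1")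
    case True then show ?thesis using chain_all[OF n] by simp
  next
    case False
    then have "r n k \<le> l n (2^(n-1) - 1)" using mono_cells[OF n, of k "2^(n-1) - 1"] k by simp
    moreover have "l n (2^(n-1) - 1) \<le> r n (2^(n-1) - 1)" using ord[OF n, of "2^(n-1) - 1"] by simp
    ultimately show ?thesis using chain_all[OF n] by simp
  qed
  ultimately show ?thesis by simp
qed

lemma cell_len: "1 \<le> n \<Longrightarrow> k < 2^(n-1) \<Longrightarrow> r n k - l n k \<le> rho^(n-1)"
proof (induction n arbitrary: k rule: dec_induct)
  case base then show ?case using part_init by simp
next
  case (step n j)
  define k where "k = j div 2"
  have kk: "k < 2^(n-1)" using step(1,4) unfolding k_def by (cases n) auto
  have id: "(n,k) \<in> idx" using kk step(1) by (auto simp: idx_iff)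
  have "r (n+1) j - l (n+1) j \<le> max (r n k - mp n k) (mp n k - l n k)"
  proof (cases "even j")
    case True then have "j = 2*k" by (simp add: k_def)
    then show ?thesis using part_left[OF id] step(1) by simp
  next
    case False then have "j = 2*k+1" by (simp add: k_def)
    then show ?thesis using part_right[OF id] step(1) by simp
  qed
  also have "\<dots> \<le> rho * (r n k - l n k)" using part_ratio[OF id] step(1) by simp
  also have "\<dots> \<le> rho * rho^(n-1)" using step.IH[OF kk] rho by (intro mult_left_mono) auto
  also have "\<dots> = rho^(Suc n - 1)" using step(1) by (cases n) auto
  finally show ?case by simp
qed

lemma cover: "1 \<le> n \<Longrightarrow> t \<in> {0..1} \<Longrightarrow> \<exists>k<2^(n-1). l n k \<le> t \<and> t \<le> r n k"
proof -
  assume n: "1 \<le> n" and t: "t \<in> {0..1}"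
  define K where "K = {k. k < 2^(n-1) \<and> l n k \<le> t}"
  have "0 \<in> K" using chain_all[OF n] t by (simp add: K_def)
  have fin: "finite K" by (simp add: K_def)
  define k where "k = Max K"
  have kK: "k \<in> K" using Max_in[OF fin] \<open>0 \<in> K\<close> k_def by blast
  show ?thesis
  proof (cases "k = 2^(n-1) - 1")
    case True
    have "k < 2^(n-1)" using kK by (simp add: K_def)
    moreover have "l n k \<le> t \<and> t \<le> r n k" using True kK chain_all[OF n] t by (auto simp: K_def)
    ultimately show ?thesis by blast
  next
    case False
    then have k1: "k + 1 < 2^(n-1)" using kK by (auto simp: K_def)
    have "k + 1 \<notin> K" using Max_ge[OF fin, of "k+1"] k_def by auto
    then have "t < l n (k+1)" using k1 by (auto simp: K_def)
    then show ?thesis using chain[OF n k1] kK by (auto simp: K_def)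
  qed
qed

end

type_synonym 'n sqm = "real^'n^'n"

lemma mcancel:
  fixes A X :: "real^'n^'n"
  assumes "invertible A"
  shows "A ** matrix_inv A = mat 1" "matrix_inv A ** A = mat 1"
    "X ** A ** matrix_inv A = X" "X ** matrix_inv A ** A = X"
    "transpose A ** transpose (matrix_inv A) = mat 1" "transpose (matrix_inv A) ** transpose A = mat 1"
    "X ** transpose A ** transpose (matrix_inv A) = X" "X ** transpose (matrix_inv A) ** transpose A = X"
proof -
  note m = minv[OF assms]
  show "A ** matrix_inv A = mat 1" "matrix_inv A ** A = mat 1" using m by auto
  show "X ** A ** matrix_inv A = X" "X ** matrix_inv A ** A = X"
    using m by (simp_all add: matrix_mul_assoc[symmetric])
  show t1: "transpose A ** transpose (matrix_inv A) = mat 1"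
    by (metis m(1) matrix_transpose_mul transpose_mat)
  show t2: "transpose (matrix_inv A) ** transpose A = mat 1"
    by (metis m(2) matrix_transpose_mul transpose_mat)
  show "X ** transpose A ** transpose (matrix_inv A) = X" "X ** transpose (matrix_inv A) ** transpose A = X"
    using t1 t2 by (simp_all add: matrix_mul_assoc[symmetric])
qed

lemma Sigma_form:
  fixes G A S B :: "real^'n^'n"
  assumes G: "invertible G" and S: "invertible S"
  shows "(G ** A ** transpose G) ** matrix_inv (G ** S ** transpose G) ** (G ** B ** transpose G)
       = G ** A ** matrix_inv S ** B ** transpose G"
proof -
  have "matrix_inv (G ** S ** transpose G) = transpose (matrix_inv G) ** matrix_inv S ** matrix_inv G"
    by (simp add: minv_mult invertible_mult G S transpose_invertible minv_transpose matrix_mul_assoc)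
  then show ?thesis by (simp add: matrix_mul_assoc mcancel G)
qed

lemma LLt:
  fixes G A S B sg :: "real^'n^'n"
  assumes G: "invertible G" and A: "invertible A" and As: "transpose A = A"
    and sg: "sg ** transpose sg = G ** A ** matrix_inv S ** B ** transpose G"
  shows "(matrix_inv A ** matrix_inv G ** sg) ** transpose (matrix_inv A ** matrix_inv G ** sg)
     = matrix_inv S ** B ** matrix_inv A"
proof -
  have "(matrix_inv A ** matrix_inv G ** sg) ** transpose (matrix_inv A ** matrix_inv G ** sg)
      = matrix_inv A ** matrix_inv G ** (sg ** transpose sg) ** transpose (matrix_inv G) ** matrix_inv A"
    by (simp add: matrix_transpose_mul matrix_mul_assoc minv_sym[OF A As])
  also have "\<dots> = matrix_inv S ** B ** matrix_inv A"
    unfolding sg by (simp add: matrix_mul_assoc mcancel G A)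
  finally show ?thesis .
qed

lemma LRt:
  fixes G A S B sg :: "real^'n^'n"
  assumes G: "invertible G" and A: "invertible A" and B: "invertible B" and Bs: "transpose B = B"
    and sg: "sg ** transpose sg = G ** A ** matrix_inv S ** B ** transpose G"
  shows "(matrix_inv A ** matrix_inv G ** sg) ** transpose (matrix_inv B ** matrix_inv G ** sg)
     = matrix_inv S"
proof -
  have "(matrix_inv A ** matrix_inv G ** sg) ** transpose (matrix_inv B ** matrix_inv G ** sg)
      = matrix_inv A ** matrix_inv G ** (sg ** transpose sg) ** transpose (matrix_inv G) ** matrix_inv B"
    by (simp add: matrix_transpose_mul matrix_mul_assoc minv_sym[OF B Bs])
  also have "\<dots> = matrix_inv S"
    unfolding sg by (simp add: matrix_mul_assoc mcancel G A B)
  finally show ?thesis .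
qed

lemma RRt:
  fixes G A S B sg :: "real^'n^'n"
  assumes G: "invertible G" and B: "invertible B" and Bs: "transpose B = B"
    and sg: "sg ** transpose sg = G ** A ** matrix_inv S ** B ** transpose G"
  shows "(matrix_inv B ** matrix_inv G ** sg) ** transpose (matrix_inv B ** matrix_inv G ** sg)
     = matrix_inv B ** A ** matrix_inv S"
proof -
  have "(matrix_inv B ** matrix_inv G ** sg) ** transpose (matrix_inv B ** matrix_inv G ** sg)
      = matrix_inv B ** matrix_inv G ** (sg ** transpose sg) ** transpose (matrix_inv G) ** matrix_inv B"
    by (simp add: matrix_transpose_mul matrix_mul_assoc minv_sym[OF B Bs])
  also have "\<dots> = matrix_inv B ** A ** matrix_inv S"
    unfolding sg by (simp add: matrix_mul_assoc mcancel G B)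
  finally show ?thesis .
qed

lemma AL_eq_BR:
  fixes G A S B sg :: "real^'n^'n"
  assumes "invertible A" "invertible B"
  shows "A ** (matrix_inv A ** matrix_inv G ** sg) = B ** (matrix_inv B ** matrix_inv G ** sg)"
  by (simp add: matrix_mul_assoc mcancel assms)

lemma upd_LL:
  fixes A S X Y C :: "real^'n^'n"
  assumes A: "invertible A" and S: "invertible S"
  shows "C + X ** matrix_inv S ** Y + X ** (matrix_inv S ** (S - A) ** matrix_inv A) ** Y
       = C + X ** matrix_inv A ** Y"
  by (simp add: matrix_mul_assoc mcancel A S mat_sub_ldistrib mat_sub_rdistrib matrix_add_ldistrib mat_add_rdistrib)

lemma upd_RR:
  fixes A B S u v C :: "real^'n^'n"
  assumes B: "invertible B" and S: "invertible S" and AS: "A = S - B"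
  shows "C + (S - u) ** matrix_inv S ** (S - v) + u ** (matrix_inv B ** A ** matrix_inv S) ** v
       = C + A + (B - u) ** matrix_inv B ** (B - v)"
  unfolding AS
  by (simp add: matrix_mul_assoc mcancel B S mat_sub_ldistrib mat_sub_rdistrib matrix_add_ldistrib mat_add_rdistrib)

lemma upd_LR:
  fixes S X v C :: "real^'n^'n"
  assumes S: "invertible S"
  shows "C + X ** matrix_inv S ** (S - v) + X ** matrix_inv S ** v = C + X"
  by (simp add: matrix_mul_assoc mcancel S mat_sub_ldistrib mat_sub_rdistrib)

lemma upd_RL:
  fixes S Y u C :: "real^'n^'n"
  assumes S: "invertible S"
  shows "C + (S - u) ** matrix_inv S ** Y + u ** matrix_inv S ** Y = C + Y"
  by (simp add: matrix_mul_assoc mcancel S mat_sub_ldistrib mat_sub_rdistrib)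


lemma idxN_0: "idxN 0 = {(0,0)}"
  by (auto simp: idxN_def idx_def)

lemma idxN_Suc: "idxN (Suc N) = idxN N \<union> (\<lambda>k. (Suc N, k)) ` {..<2^N}"
  by (auto simp: idxN_def idx_def le_Suc_eq)

lemma idxN_notin: "(Suc N, k) \<notin> idxN N"
  by (auto simp: idxN_def)

lemma idxN_sub: "idxN N \<subseteq> {0..N} \<times> {..<2^N}"
proof
  fix p assume "p \<in> idxN N"
  then show "p \<in> {0..N} \<times> {..<2^N}"
  proof (cases p)
    case (Pair n k)
    with \<open>p \<in> idxN N\<close> have "(n = 0 \<and> k = 0) \<or> (1 \<le> n \<and> n \<le> N \<and> k < 2^(n-1))"
      by (auto simp: idxN_def idx_def)
    moreover have "1 \<le> n \<Longrightarrow> n \<le> N \<Longrightarrow> (2::nat)^(n-1) \<le> 2^N" by (intro power_increasing) auto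
    ultimately show ?thesis using Pair by (auto intro: less_le_trans)
  qed
qed

lemma finite_idxN: "finite (idxN N)"
  by (rule finite_subset[OF idxN_sub]) auto

lemma idxN_idx: "idxN N \<subseteq> idx"
  by (auto simp: idxN_def idx_def)

lemma idxN_mono: "N \<le> M \<Longrightarrow> idxN N \<subseteq> idxN M"
  by (auto simp: idxN_def)

locale setting = gm alpha F sG + part l mp r rho
  for alpha :: "real \<Rightarrow> real^'d^'d" and F sG l mp r rho +
  fixes sig :: "nat \<Rightarrow> nat \<Rightarrow> real^'d^'d"
  assumes sig00: "sig 0 0 ** transpose (sig 0 0) = gg F 1 ** hh F sG 0 1 ** transpose (gg F 1)"
    and signk: "\<And>n k. (n,k) \<in> idx \<Longrightarrow> n \<ge> 1 \<Longrightarrow>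
           sig n k ** transpose (sig n k) = Sigma_nk F sG (l n k) (mp n k) (r n k)"
begin

abbreviation "G \<equiv> gg F"

definition "L0 = matrix_inv (H 0 1) ** matrix_inv (G 1) ** sig 0 0"
definition "Lm n k = matrix_inv (H (l n k) (mp n k)) ** matrix_inv (G (mp n k)) ** sig n k"
definition "Rm n k = matrix_inv (H (mp n k) (r n k)) ** matrix_inv (G (mp n k)) ** sig n k"

definition phi :: "nat \<Rightarrow> nat \<Rightarrow> real \<Rightarrow> real^'d^'d" where
  "phi n k t = (if n = 0 then H 0 t ** L0
     else if l n k \<le> t \<and> t \<le> mp n k then H (l n k) t ** Lm n k
     else if mp n k \<le> t \<and> t \<le> r n k then H t (r n k) ** Rm n k else 0)"

lemma psi_eq: "psi F sG l mp r sig n k t = G t ** phi n k t"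
  by (simp add: psi_def phi_def L0_def Lm_def Rm_def matrix_mul_assoc)

definition KN :: "nat \<Rightarrow> real \<Rightarrow> real \<Rightarrow> real^'d^'d" where
  "KN N t s = (\<Sum>p\<in>idxN N. phi (fst p) (snd p) t ** transpose (phi (fst p) (snd p) s))"

lemma G_inv: "t \<in> {0..1} \<Longrightarrow> invertible (G t)"
  unfolding gg_def by (rule g_invertible)

lemma H_sym': "a \<in> {0..1} \<Longrightarrow> b \<in> {0..1} \<Longrightarrow> transpose (H a b) = H a b"
  by (rule H_sym)

lemma L0L0: "L0 ** transpose L0 = matrix_inv (H 0 1)"
proof -
  have inv: "invertible (H 0 1)" by (rule H_inv) auto
  have s: "transpose (H 0 1) = H 0 1" by (rule H_sym) auto
  have g: "invertible (G 1)" by (rule G_inv) auto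
  have "L0 ** transpose L0 = matrix_inv (H 0 1) ** matrix_inv (G 1) ** (sig 0 0 ** transpose (sig 0 0))
       ** transpose (matrix_inv (G 1)) ** matrix_inv (H 0 1)"
    by (simp add: L0_def matrix_transpose_mul matrix_mul_assoc minv_sym[OF inv s])
  also have "\<dots> = matrix_inv (H 0 1)"
    unfolding sig00 by (simp add: matrix_mul_assoc mcancel inv g)
  finally show ?thesis .
qed

context
  fixes n k :: nat assumes nk: "1 \<le> n" "k < 2^(n-1)"
begin

lemma nk_idx: "(n,k) \<in> idx" using nk by (simp add: idx_iff)

lemma nk_ord: "0 \<le> l n k" "l n k < mp n k" "mp n k < r n k" "r n k \<le> 1"
  using ord[OF nk] cell_bounds[OF nk] by auto

lemma nk_H: "invertible (H (l n k) (mp n k))" "invertible (H (mp n k) (r n k))" "invertible (H (l n k) (r n k))"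
  "transpose (H (l n k) (mp n k)) = H (l n k) (mp n k)" "transpose (H (mp n k) (r n k)) = H (mp n k) (r n k)"
  "H (l n k) (r n k) = H (l n k) (mp n k) + H (mp n k) (r n k)"
  using nk_ord by (auto intro!: H_inv H_sym H_add)

lemma nk_sig: "sig n k ** transpose (sig n k) = G (mp n k) ** H (l n k) (mp n k) **
     matrix_inv (H (l n k) (r n k)) ** H (mp n k) (r n k) ** transpose (G (mp n k))"
proof -
  have "sig n k ** transpose (sig n k) = Sigma_nk F sG (l n k) (mp n k) (r n k)"
    using signk[OF nk_idx] nk by simp
  also have "\<dots> = (G (mp n k) ** H (l n k) (mp n k) ** transpose (G (mp n k))) **
     matrix_inv (G (mp n k) ** H (l n k) (r n k) ** transpose (G (mp n k))) **
     (G (mp n k) ** H (mp n k) (r n k) ** transpose (G (mp n k)))"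
    unfolding Sigma_nk_def gg_def using nk_ord by (simp add: hu_eq)
  also have "\<dots> = G (mp n k) ** H (l n k) (mp n k) **
     matrix_inv (H (l n k) (r n k)) ** H (mp n k) (r n k) ** transpose (G (mp n k))"
    by (rule Sigma_form) (use nk_ord nk_H in \<open>auto intro: G_inv\<close>)
  finally show ?thesis .
qed

lemma nk_Gi: "invertible (G (mp n k))" using nk_ord by (intro G_inv) auto

lemma LL: "Lm n k ** transpose (Lm n k) = matrix_inv (H (l n k) (r n k)) ** H (mp n k) (r n k) ** matrix_inv (H (l n k) (mp n k))"
  unfolding Lm_def by (rule LLt[OF nk_Gi nk_H(1) nk_H(4) nk_sig])

lemma LR: "Lm n k ** transpose (Rm n k) = matrix_inv (H (l n k) (r n k))"
  unfolding Lm_def Rm_def by (rule LRt[OF nk_Gi nk_H(1) nk_H(2) nk_H(5) nk_sig])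

lemma RR: "Rm n k ** transpose (Rm n k) = matrix_inv (H (mp n k) (r n k)) ** H (l n k) (mp n k) ** matrix_inv (H (l n k) (r n k))"
  unfolding Rm_def by (rule RRt[OF nk_Gi nk_H(2) nk_H(5) nk_sig])

lemma RL: "Rm n k ** transpose (Lm n k) = matrix_inv (H (l n k) (r n k))"
proof -
  have "Rm n k ** transpose (Lm n k) = transpose (Lm n k ** transpose (Rm n k))"
    by (simp add: matrix_transpose_mul)
  also have "\<dots> = matrix_inv (H (l n k) (r n k))"
    unfolding LR by (rule minv_sym[OF nk_H(3)]) (use nk_ord in \<open>auto intro: H_sym\<close>)
  finally show ?thesis .
qed

lemma phi_left: "l n k \<le> t \<Longrightarrow> t \<le> mp n k \<Longrightarrow> phi n k t = H (l n k) t ** Lm n k"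
  using nk by (simp add: phi_def)

lemma phi_right: "mp n k \<le> t \<Longrightarrow> t \<le> r n k \<Longrightarrow> phi n k t = H t (r n k) ** Rm n k"
proof -
  assume t: "mp n k \<le> t" "t \<le> r n k"
  show ?thesis
  proof (cases "t = mp n k")
    case True
    have "H (l n k) (mp n k) ** Lm n k = H (mp n k) (r n k) ** Rm n k"
      unfolding Lm_def Rm_def by (rule AL_eq_BR) (use nk_H in auto)
    then show ?thesis using True nk nk_ord by (simp add: phi_def)
  next
    case False then show ?thesis using t nk by (simp add: phi_def)
  qed
qed

lemma phi_out: "t \<le> l n k \<or> r n k \<le> t \<Longrightarrow> phi n k t = 0"
proof -
  assume t: "t \<le> l n k \<or> r n k \<le> t"
  show ?thesis
  proof (cases "t = l n k")
    case True then show ?thesis using phi_left nk_ord by simp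
  next
    case False
    show ?thesis
    proof (cases "t = r n k")
      case True then show ?thesis using phi_right nk_ord by simp
    next
      case False
      then show ?thesis using \<open>t \<noteq> l n k\<close> t nk nk_ord by (auto simp: phi_def)
    qed
  qed
qed

end

lemma phi_other:
  assumes n: "1 \<le> n" and i: "i < 2^(n-1)" and j: "j < 2^(n-1)" and ij: "i \<noteq> j"
    and t: "l n j \<le> t" "t \<le> r n j"
  shows "phi n i t = 0"
proof (rule phi_out[OF n i])
  show "t \<le> l n i \<or> r n i \<le> t"
  proof (cases "i < j")
    case True then show ?thesis using mono_cells[OF n True j] t by auto
  next
    case False then have "j < i" using ij by simp
    then show ?thesis using mono_cells[OF n _ i, of j] t by auto
  qed
qed

end

lemma tr_split: "(X::real^'n^'n) ** L ** transpose (Y ** L') = X ** (L ** transpose L') ** transpose Y"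
  by (simp add: matrix_transpose_mul matrix_mul_assoc)

context setting begin

lemma KN_Suc: "KN (Suc N) t s = KN N t s + (\<Sum>i<2^N. phi (Suc N) i t ** transpose (phi (Suc N) i s))"
proof -
  have "KN (Suc N) t s = KN N t s + (\<Sum>p\<in>(\<lambda>k. (Suc N, k)) ` {..<2^N}. phi (fst p) (snd p) t ** transpose (phi (fst p) (snd p) s))"
    unfolding KN_def idxN_Suc
    by (rule sum.union_disjoint) (auto simp: finite_idxN idxN_notin)
  also have "(\<Sum>p\<in>(\<lambda>k. (Suc N, k)) ` {..<2^N}. phi (fst p) (snd p) t ** transpose (phi (fst p) (snd p) s))
      = (\<Sum>i<2^N. phi (Suc N) i t ** transpose (phi (Suc N) i s))"
    by (subst sum.reindex) (auto simp: inj_on_def)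
  finally show ?thesis .
qed

lemma new_sum:
  assumes k: "k < 2^N" and k': "k' < 2^N"
    and t: "l (Suc N) k \<le> t" "t \<le> r (Suc N) k" and s: "l (Suc N) k' \<le> s" "s \<le> r (Suc N) k'"
  shows "(\<Sum>i<2^N. phi (Suc N) i t ** transpose (phi (Suc N) i s))
     = (if k = k' then phi (Suc N) k t ** transpose (phi (Suc N) k s) else 0)"
proof -
  have n: "1 \<le> Suc N" by simp
  have kk: "k < 2^(Suc N - 1)" "k' < 2^(Suc N - 1)" using k k' by auto
  have z: "phi (Suc N) i t ** transpose (phi (Suc N) i s) = 0" if "i < 2^N" "i \<noteq> k \<or> i \<noteq> k'" for i
  proof (cases "i \<noteq> k")
    case True
    have "phi (Suc N) i t = 0" by (rule phi_other[OF n _ kk(1) True t]) (use that in auto)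
    then show ?thesis by simp
  next
    case False
    then have "i \<noteq> k'" using that by auto
    have "phi (Suc N) i s = 0" by (rule phi_other[OF n _ kk(2) \<open>i \<noteq> k'\<close> s]) (use that in auto)
    then show ?thesis by simp
  qed
  show ?thesis
  proof (cases "k = k'")
    case True
    have "(\<Sum>i<2^N. phi (Suc N) i t ** transpose (phi (Suc N) i s))
       = (\<Sum>i\<in>{k}. phi (Suc N) i t ** transpose (phi (Suc N) i s))"
      by (rule sum.mono_neutral_right) (use k z True in auto)
    then show ?thesis using True by simp
  next
    case False
    have "(\<Sum>i<2^N. phi (Suc N) i t ** transpose (phi (Suc N) i s)) = (\<Sum>i<(2::nat)^N. (0::real^'d^'d))"
      by (rule sum.cong) (use z False in auto)
    then show ?thesis using False by simp
  qed
qed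

lemma cell_sub:
  assumes j: "j < 2^N" and t: "l (Suc N) j \<le> t" "t \<le> r (Suc N) j"
  shows "t \<in> {0..1}"
  using cell_bounds[of "Suc N" j] j t by auto

lemma kernel:
  "j < 2^N \<Longrightarrow> j' < 2^N \<Longrightarrow> l (Suc N) j \<le> t \<Longrightarrow> t \<le> r (Suc N) j \<Longrightarrow>
   l (Suc N) j' \<le> s \<Longrightarrow> s \<le> r (Suc N) j' \<Longrightarrow>
   KN N t s = (if j < j' then H 0 t else if j' < j then H 0 s
     else H 0 (l (Suc N) j) + H (l (Suc N) j) t ** matrix_inv (H (l (Suc N) j) (r (Suc N) j)) ** H (l (Suc N) j) s)"
proof (induction N arbitrary: j j' t s)
  case 0
  then have jj: "j = 0" "j' = 0" by auto
  have ts: "t \<in> {0..1}" "s \<in> {0..1}" using 0 part_init jj by auto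
  have "KN 0 t s = H 0 t ** L0 ** transpose (H 0 s ** L0)"
    by (simp add: KN_def idxN_0 phi_def)
  also have "\<dots> = H 0 t ** matrix_inv (H 0 1) ** H 0 s"
    unfolding tr_split L0L0 using H_sym[of 0 s] ts by simp
  finally show ?case using jj part_init by simp
next
  case (Suc N j j' t s)
  define n where "n = Suc N"
  define k where "k = j div 2"
  define k' where "k' = j' div 2"
  have n1: "1 \<le> n" by (simp add: n_def)
  have kN: "k < 2^N" "k' < 2^N" using Suc.prems(1,2) by (auto simp: k_def k'_def)
  have kn: "k < 2^(n-1)" "k' < 2^(n-1)" using kN by (auto simp: n_def)
  have idk: "(n,k) \<in> idx" "(n,k') \<in> idx" using kn n1 by (auto simp: idx_iff)
  have chj: "(l (Suc n) j = l n k \<and> r (Suc n) j = mp n k \<and> j = 2*k) \<or>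
             (l (Suc n) j = mp n k \<and> r (Suc n) j = r n k \<and> j = 2*k+1)"
  proof -
    have "j = 2*k \<or> j = 2*k+1" unfolding k_def by presburger
    then show ?thesis using part_left[OF idk(1) n1] part_right[OF idk(1) n1] by auto
  qed
  have chj': "(l (Suc n) j' = l n k' \<and> r (Suc n) j' = mp n k' \<and> j' = 2*k') \<or>
             (l (Suc n) j' = mp n k' \<and> r (Suc n) j' = r n k' \<and> j' = 2*k'+1)"
  proof -
    have "j' = 2*k' \<or> j' = 2*k'+1" unfolding k'_def by presburger
    then show ?thesis using part_left[OF idk(2) n1] part_right[OF idk(2) n1] by auto
  qed
  note ok = nk_ord[OF n1 kn(1)] nk_ord[OF n1 kn(2)]
  have tpar: "l n k \<le> t" "t \<le> r n k" using chj Suc.prems(3,4) ok unfolding n_def by auto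
  have spar: "l n k' \<le> s" "s \<le> r n k'" using chj' Suc.prems(5,6) ok unfolding n_def by auto
  have IH: "KN N t s = (if k < k' then H 0 t else if k' < k then H 0 s
     else H 0 (l n k) + H (l n k) t ** matrix_inv (H (l n k) (r n k)) ** H (l n k) s)"
    using Suc.IH[OF kN tpar[unfolded n_def] spar[unfolded n_def]] by (simp add: n_def)
  have KS: "KN (Suc N) t s = KN N t s + (if k = k' then phi n k t ** transpose (phi n k s) else 0)"
    unfolding KN_Suc using new_sum[OF kN tpar[unfolded n_def] spar[unfolded n_def]] by (simp add: n_def)
  show ?case
  proof (cases "k = k'")
    case False
    then have "k < k' \<or> k' < k" by auto
    moreover have "k < k' \<Longrightarrow> j < j'" "k' < k \<Longrightarrow> j' < j" unfolding k_def k'_def by presburger+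
    ultimately show ?thesis using KS IH False by (auto simp: n_def)
  next
    case True
    define a where "a = l n k" define m where "m = mp n k" define b where "b = r n k"
    have abm: "0 \<le> a" "a < m" "m < b" "b \<le> 1" using ok by (auto simp: a_def m_def b_def)
    have ts: "t \<in> {0..1}" "s \<in> {0..1}" using tpar spar abm True by (auto simp: a_def b_def)
    have abD: "a \<in> {0..1}" "m \<in> {0..1}" "b \<in> {0..1}" using abm by auto
    note HH = nk_H[OF n1 kn(1), folded a_def m_def b_def]
    have Hsym: "\<And>x y. x \<in> {0..1} \<Longrightarrow> y \<in> {0..1} \<Longrightarrow> transpose (H x y) = H x y" by (rule H_sym)
    have Hadd: "\<And>x y z. x \<in> {0..1} \<Longrightarrow> z \<in> {0..1} \<Longrightarrow> x \<le> y \<Longrightarrow> y \<le> z \<Longrightarrow> H x z = H x y + H y z"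
      by (rule H_add)
    have trs: "transpose (H a s) = H a s" "transpose (H s b) = H s b"
      using Hsym[of a s] Hsym[of s b] abD ts by auto
    have IH': "KN N t s = H 0 a + H a t ** matrix_inv (H a b) ** H a s"
      using IH True by (simp add: a_def b_def)
    have KS': "KN (Suc N) t s = KN N t s + phi n k t ** transpose (phi n k s)"
      using KS True by simp
    consider (cLL) "j = 2*k" "j' = 2*k" | (cRR) "j = 2*k+1" "j' = 2*k+1"
      | (cLR) "j = 2*k" "j' = 2*k+1" | (cRL) "j = 2*k+1" "j' = 2*k" using chj chj' True by auto
    then show ?thesis
    proof cases
      case cLL
      then have ch: "l (Suc n) j = a" "r (Suc n) j = m" using chj by (auto simp: a_def m_def)
      have tL: "a \<le> t" "t \<le> m" using Suc.prems(3,4) ch by (auto simp: n_def)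
      have sL: "a \<le> s" "s \<le> m" using Suc.prems(5,6) ch cLL True by (auto simp: n_def)
      have new: "phi n k t ** transpose (phi n k s) = H a t ** (matrix_inv (H a b) ** (H a b - H a m) ** matrix_inv (H a m)) ** H a s"
        using phi_left[OF n1 kn(1)] tL sL cLL
        unfolding a_def[symmetric] m_def[symmetric]
        by (simp add: tr_split LL[OF n1 kn(1), folded a_def m_def b_def] trs HH(6))
      have "KN (Suc N) t s = H 0 a + H a t ** matrix_inv (H a m) ** H a s"
        unfolding KS' IH' new by (rule upd_LL) (use HH in auto)
      then show ?thesis using cLL ch by (simp add: n_def)
    next
      case cRR
      then have ch: "l (Suc n) j = m" "r (Suc n) j = b" using chj by (auto simp: m_def b_def)
      have tR: "m \<le> t" "t \<le> b" using Suc.prems(3,4) ch by (auto simp: n_def)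
      have sR: "m \<le> s" "s \<le> b" using Suc.prems(5,6) ch cRR True by (auto simp: n_def)
      have new: "phi n k t ** transpose (phi n k s) = H t b ** (matrix_inv (H m b) ** H a m ** matrix_inv (H a b)) ** H s b"
        using phi_right[OF n1 kn(1)] tR sR
        unfolding a_def[symmetric] m_def[symmetric] b_def[symmetric]
        by (simp add: tr_split RR[OF n1 kn(1), folded a_def m_def b_def] trs abm)
      have e1: "H a t = H a b - H t b" "H a s = H a b - H s b" "H m t = H m b - H t b" "H m s = H m b - H s b"
        "H 0 m = H 0 a + H a m"
      proof -
        have h1: "H a b = H a t + H t b" by (rule Hadd) (use abm tR in auto)
        have h2: "H a b = H a s + H s b" by (rule Hadd) (use abm sR in auto)
        have h3: "H m b = H m t + H t b" by (rule Hadd) (use abm tR in auto)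
        have h4: "H m b = H m s + H s b" by (rule Hadd) (use abm sR in auto)
        have h5: "H 0 m = H 0 a + H a m" by (rule Hadd) (use abm in auto)
        show "H a t = H a b - H t b" unfolding h1 by simp
        show "H a s = H a b - H s b" unfolding h2 by simp
        show "H m t = H m b - H t b" unfolding h3 by simp
        show "H m s = H m b - H s b" unfolding h4 by simp
        show "H 0 m = H 0 a + H a m" by (rule h5)
      qed
      have "KN (Suc N) t s = H 0 m + H m t ** matrix_inv (H m b) ** H m s"
        unfolding KS' IH' new e1
        by (rule upd_RR) (use HH in auto)
      then show ?thesis using cRR ch by (simp add: n_def)
    next
      case cLR
      have tL: "a \<le> t" "t \<le> m" using Suc.prems(3,4) chj cLR by (auto simp: n_def a_def m_def)
      have sR: "m \<le> s" "s \<le> b" using Suc.prems(5,6) chj' cLR True by (auto simp: n_def m_def b_def)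
      have new: "phi n k t ** transpose (phi n k s) = H a t ** matrix_inv (H a b) ** H s b"
        using phi_left[OF n1 kn(1)] phi_right[OF n1 kn(1)] tL sR
        unfolding a_def[symmetric] m_def[symmetric] b_def[symmetric]
        by (simp add: tr_split LR[OF n1 kn(1), folded a_def m_def b_def] trs)
      have e1: "H a s = H a b - H s b" "H 0 t = H 0 a + H a t"
      proof -
        have h2: "H a b = H a s + H s b" by (rule Hadd) (use abm sR in auto)
        show "H a s = H a b - H s b" unfolding h2 by simp
        show "H 0 t = H 0 a + H a t" by (rule Hadd) (use abm tL in auto)
      qed
      have "KN (Suc N) t s = H 0 t"
        unfolding KS' IH' new e1 by (rule upd_LR) (use HH in auto)
      then show ?thesis using cLR by simp
    next
      case cRL
      have tR: "m \<le> t" "t \<le> b" using Suc.prems(3,4) chj cRL by (auto simp: n_def m_def b_def)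
      have sL: "a \<le> s" "s \<le> m" using Suc.prems(5,6) chj' cRL True by (auto simp: n_def a_def m_def)
      have new: "phi n k t ** transpose (phi n k s) = H t b ** matrix_inv (H a b) ** H a s"
        using phi_left[OF n1 kn(1)] phi_right[OF n1 kn(1)] tR sL
        unfolding a_def[symmetric] m_def[symmetric] b_def[symmetric]
        by (simp add: tr_split RL[OF n1 kn(1), folded a_def m_def b_def] trs)
      have e1: "H a t = H a b - H t b" "H 0 s = H 0 a + H a s"
      proof -
        have h2: "H a b = H a t + H t b" by (rule Hadd) (use abm tR in auto)
        show "H a t = H a b - H t b" unfolding h2 by simp
        show "H 0 s = H 0 a + H a s" by (rule Hadd) (use abm sL in auto)
      qed
      have "KN (Suc N) t s = H 0 s"
        unfolding KS' IH' new e1 by (rule upd_RL) (use HH in auto)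
      then show ?thesis using cRL by simp
    qed
  qed
qed

end

lemma sym_dot: "transpose (A::real^'n^'n) = A \<Longrightarrow> x \<bullet> (A *v y) = (A *v x) \<bullet> y"
  by (metis dot_mv)

lemma entry_dot: "(X::real^'n^'n) $ i $ j = axis i 1 \<bullet> (X *v axis j 1)"
proof -
  have "(X *v axis j 1) $ i = X $ i $ j"
    by (simp add: matrix_vector_mult_def axis_def if_distrib cong: if_cong)
  then show ?thesis by (simp add: inner_axis')
qed

lemma quad_le:
  fixes P S :: "real^'n^'n"
  assumes S: "invertible S" "transpose S = S" and P: "transpose P = P"
    and Ppsd: "\<And>y. 0 \<le> y \<bullet> (P *v y)" and Rpsd: "\<And>y. 0 \<le> y \<bullet> ((S - P) *v y)"
  shows "(P *v x) \<bullet> (matrix_inv S *v (P *v x)) \<le> x \<bullet> (P *v x)"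
proof -
  define u where "u = P *v x"
  define z where "z = matrix_inv S *v u"
  have Sz: "S *v z = u" unfolding z_def by (simp add: matrix_vector_mul_assoc minv[OF S(1)])
  have zu: "u \<bullet> z = x \<bullet> (P *v z)" unfolding u_def using sym_dot[OF P] by simp
  have "z \<bullet> (S *v z) = z \<bullet> (P *v z) + z \<bullet> ((S - P) *v z)"
    by (simp add: matrix_vector_mult_diff_rdistrib inner_diff_right)
  then have zSz: "z \<bullet> (P *v z) \<le> z \<bullet> (S *v z)" using Rpsd[of z] by simp
  have "0 \<le> (x - z) \<bullet> (P *v (x - z))" by (rule Ppsd)
  also have "\<dots> = x \<bullet> (P *v x) - 2 * (x \<bullet> (P *v z)) + z \<bullet> (P *v z)"
    using sym_dot[OF P, of z x]
    by (simp add: matrix_vector_mult_diff_distrib inner_diff_left inner_diff_right inner_commute)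
  finally have "2 * (x \<bullet> (P *v z)) \<le> x \<bullet> (P *v x) + z \<bullet> (P *v z)" by simp
  also have "\<dots> \<le> x \<bullet> (P *v x) + z \<bullet> (S *v z)" using zSz by simp
  also have "z \<bullet> (S *v z) = x \<bullet> (P *v z)" using Sz zu by (simp add: inner_commute)
  finally have "x \<bullet> (P *v z) \<le> x \<bullet> (P *v x)" by simp
  then show ?thesis using zu by (simp add: u_def z_def)
qed

lemma cross_bound:
  fixes P Q S :: "real^'n^'n"
  assumes S: "invertible S" "transpose S = S" and P: "transpose P = P" and Q: "transpose Q = Q"
    and Ppsd: "\<And>y. 0 \<le> y \<bullet> (P *v y)" and Rpsd: "\<And>y. 0 \<le> y \<bullet> ((S - P) *v y)"
    and Qpsd: "\<And>y. 0 \<le> y \<bullet> (Q *v y)" and RQpsd: "\<And>y. 0 \<le> y \<bullet> ((S - Q) *v y)"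
  shows "\<bar>(P ** matrix_inv S ** Q) $ i $ j\<bar> \<le> (P $ i $ i + Q $ j $ j) / 2"
proof -
  define W where "W = matrix_inv S"
  have Ws: "transpose W = W" unfolding W_def by (rule minv_sym[OF S])
  have Wpsd: "0 \<le> y \<bullet> (W *v y)" for y
  proof -
    define z where "z = W *v y"
    have y: "y = S *v z" unfolding z_def W_def by (simp add: matrix_vector_mul_assoc minv[OF S(1)])
    have "z \<bullet> (S *v z) = z \<bullet> (P *v z) + z \<bullet> ((S - P) *v z)"
      by (simp add: matrix_vector_mult_diff_rdistrib inner_diff_right)
    then have "0 \<le> z \<bullet> (S *v z)" using Ppsd[of z] Rpsd[of z] by simp
    moreover have "y \<bullet> (W *v y) = z \<bullet> (S *v z)"
    proof -
      have "y \<bullet> (W *v y) = (S *v z) \<bullet> z" using y unfolding z_def[symmetric] by simp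
      also have "\<dots> = z \<bullet> (S *v z)" by (rule inner_commute)
      finally show ?thesis .
    qed
    ultimately show ?thesis by simp
  qed
  define u where "u = P *v axis i 1"
  define v where "v = Q *v axis j 1"
  have e: "(P ** W ** Q) $ i $ j = u \<bullet> (W *v v)"
    unfolding entry_dot[of _ i j] u_def v_def
    by (simp add: matrix_vector_mul_assoc[symmetric] sym_dot[OF P])
  have uu: "u \<bullet> (W *v u) \<le> P $ i $ i"
    using quad_le[OF S P Ppsd Rpsd, of "axis i 1"] unfolding u_def W_def entry_dot[of P i i] .
  have vv: "v \<bullet> (W *v v) \<le> Q $ j $ j"
    using quad_le[OF S Q Qpsd RQpsd, of "axis j 1"] unfolding v_def W_def entry_dot[of Q j j] .
  have vu: "v \<bullet> (W *v u) = u \<bullet> (W *v v)" using sym_dot[OF Ws, of v u] by (simp add: inner_commute)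
  have p1: "0 \<le> (u - v) \<bullet> (W *v (u - v))" by (rule Wpsd)
  have p2: "0 \<le> (u + v) \<bullet> (W *v (u + v))" by (rule Wpsd)
  have p1': "(u - v) \<bullet> (W *v (u - v)) = u \<bullet> (W *v u) - 2 * (u \<bullet> (W *v v)) + v \<bullet> (W *v v)"
    using vu by (simp add: matrix_vector_mult_diff_distrib inner_diff_left inner_diff_right)
  have p2': "(u + v) \<bullet> (W *v (u + v)) = u \<bullet> (W *v u) + 2 * (u \<bullet> (W *v v)) + v \<bullet> (W *v v)"
    using vu by (simp add: matrix_vector_right_distrib inner_add_left inner_add_right)
  show ?thesis unfolding W_def[symmetric] e
    using p1 p2 p1' p2' uu vv by (simp add: abs_le_iff)
qed

lemma norm_le_entries: "norm (X::real^'n^'m) \<le> (\<Sum>i\<in>UNIV. \<Sum>j\<in>UNIV. \<bar>X $ i $ j\<bar>)"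
proof -
  have "norm X \<le> (\<Sum>i\<in>UNIV. norm (X $ i))" by (rule norm_vec_le_l1)
  also have "\<dots> \<le> (\<Sum>i\<in>UNIV. \<Sum>j\<in>UNIV. \<bar>X $ i $ j\<bar>)"
    by (intro sum_mono norm_le_l1_cart)
  finally show ?thesis .
qed


lemma entry_le_norm: "\<bar>(X::real^'n^'m) $ i $ j\<bar> \<le> norm X"
  by (meson Finite_Cartesian_Product.norm_nth_le component_le_norm_cart order_trans)

context setting begin

lemma H_psd': "a \<in> {0..1} \<Longrightarrow> b \<in> {0..1} \<Longrightarrow> 0 \<le> y \<bullet> (H a b *v y)"
  by (rule H_psd)

lemma same_cell_bound:
  assumes C: "\<And>a b. a \<in> {0..1} \<Longrightarrow> b \<in> {0..1} \<Longrightarrow> a \<le> b \<Longrightarrow> norm (H a b) \<le> C * (b - a)"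
    and ab: "0 \<le> a" "a < b" "b \<le> 1" and t: "a \<le> t" "t \<le> b" and s: "a \<le> s" "s \<le> b"
  shows "norm (H a t ** matrix_inv (H a b) ** H a s - H a (min t s)) \<le> (real CARD('d) * real CARD('d) * C + C) * (b - a)"
proof -
  have D: "a \<in> {0..1}" "b \<in> {0..1}" "t \<in> {0..1}" "s \<in> {0..1}" "min t s \<in> {0..1}" using ab t s by auto
  have Hs: "invertible (H a b)" by (rule H_inv) (use ab in auto)
  have C0: "0 \<le> C" using C[of a b] D ab norm_ge_zero[of "H a b"]
    by (smt (verit) zero_le_mult_iff)
  have mt: "C * (t - a) \<le> C * (b - a)" "C * (s - a) \<le> C * (b - a)"
    using C0 t s by (auto intro: mult_left_mono)
  have sy: "transpose (H a b) = H a b" "transpose (H a t) = H a t" "transpose (H a s) = H a s"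
    using D by (auto intro: H_sym)
  have dt1: "H a b = H a t + H t b" by (rule H_add) (use D t in auto)
  have dt2: "H a b = H a s + H s b" by (rule H_add) (use D s in auto)
  have ent: "\<bar>(H a t ** matrix_inv (H a b) ** H a s) $ i $ j\<bar> \<le> C * (b - a)" for i j
  proof -
    have "\<bar>(H a t ** matrix_inv (H a b) ** H a s) $ i $ j\<bar> \<le> (H a t $ i $ i + H a s $ j $ j) / 2"
    proof (rule cross_bound[OF Hs sy])
      fix y
      show "0 \<le> y \<bullet> (H a t *v y)" "0 \<le> y \<bullet> (H a s *v y)" using D by (auto intro: H_psd)
      have "H a b - H a t = H t b" using dt1 by simp
      then show "0 \<le> y \<bullet> ((H a b - H a t) *v y)" using D by (auto intro: H_psd)
      have "H a b - H a s = H s b" using dt2 by simp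
      then show "0 \<le> y \<bullet> ((H a b - H a s) *v y)" using D by (auto intro: H_psd)
    qed
    also have "\<dots> \<le> (C * (b - a) + C * (b - a)) / 2"
    proof -
      have "H a t $ i $ i \<le> C * (b - a)"
        using entry_le_norm[of "H a t" i i] C[of a t] D t mt by auto
      moreover have "H a s $ j $ j \<le> C * (b - a)"
        using entry_le_norm[of "H a s" j j] C[of a s] D s mt by auto
      ultimately show ?thesis by simp
    qed
    finally show ?thesis by simp
  qed
  have "norm (H a t ** matrix_inv (H a b) ** H a s) \<le> (\<Sum>i\<in>(UNIV::'d set). \<Sum>j\<in>(UNIV::'d set). C * (b - a))"
    using norm_le_entries[of "H a t ** matrix_inv (H a b) ** H a s"] ent
    by (meson order_trans sum_mono)
  also have "\<dots> = real CARD('d) * real CARD('d) * C * (b - a)" by simp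
  finally have n1: "norm (H a t ** matrix_inv (H a b) ** H a s) \<le> real CARD('d) * real CARD('d) * C * (b - a)" .
  have "norm (H a (min t s)) \<le> C * (min t s - a)" using C[of a "min t s"] D t s by auto
  also have "\<dots> \<le> C * (b - a)"
    using C0 s t by (intro mult_left_mono) auto
  finally have n2: "norm (H a (min t s)) \<le> C * (b - a)" .
  have "norm (H a t ** matrix_inv (H a b) ** H a s - H a (min t s))
     \<le> norm (H a t ** matrix_inv (H a b) ** H a s) + norm (H a (min t s))"
    by (rule norm_triangle_ineq4)
  also have "\<dots> \<le> (real CARD('d) * real CARD('d) * C + C) * (b - a)" using n1 n2 by (simp add: algebra_simps)
  finally show ?thesis .
qed

lemma KN_lim:
  assumes t: "t \<in> {0..1}" and s: "s \<in> {0..1}"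
  shows "(\<lambda>N. KN N t s) \<longlonglongrightarrow> H 0 (min t s)"
proof -
  obtain C where C0: "C \<ge> 0" and C: "\<And>a b. a \<in> {0..1} \<Longrightarrow> b \<in> {0..1} \<Longrightarrow> a \<le> b \<Longrightarrow> norm (H a b) \<le> C * (b - a)"
    using H_bound by blast
  define K where "K = real CARD('d) * real CARD('d) * C + C"
  have K0: "K \<ge> 0" using C0 by (simp add: K_def)
  have bnd: "norm (KN N t s - H 0 (min t s)) \<le> K * rho ^ N" for N
  proof -
    obtain j where j: "j < 2^N" "l (Suc N) j \<le> t" "t \<le> r (Suc N) j" using cover[of "Suc N" t] t by auto
    obtain j' where j': "j' < 2^N" "l (Suc N) j' \<le> s" "s \<le> r (Suc N) j'" using cover[of "Suc N" s] s by auto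
    note kern = kernel[OF j(1) j'(1) j(2,3) j'(2,3)]
    have n: "1 \<le> Suc N" by simp
    consider "j < j'" | "j' < j" | "j = j'" by linarith
    then show ?thesis
    proof cases
      case 1
      have "t \<le> s" using mono_cells[OF n 1] j j' by auto
      then show ?thesis using kern 1 K0 rho by simp
    next
      case 2
      have "s \<le> t" using mono_cells[OF n 2] j j' by auto
      then show ?thesis using kern 2 K0 rho by simp
    next
      case 3
      define a where "a = l (Suc N) j"
      define b where "b = r (Suc N) j"
      have ab: "0 \<le> a" "a < b" "b \<le> 1" using ord[of "Suc N" j] cell_bounds[of "Suc N" j] j
        by (auto simp: a_def b_def)
      have len: "b - a \<le> rho ^ N" using cell_len[of "Suc N" j] j by (simp add: a_def b_def)
      have ta: "a \<le> t" "t \<le> b" "a \<le> s" "s \<le> b" using j j' 3 by (auto simp: a_def b_def)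
      have "H 0 (min t s) = H 0 a + H a (min t s)" by (rule H_add) (use ab ta in auto)
      then have "KN N t s - H 0 (min t s) = H a t ** matrix_inv (H a b) ** H a s - H a (min t s)"
        using kern 3 by (simp add: a_def b_def)
      also have "norm \<dots> \<le> K * (b - a)" unfolding K_def by (rule same_cell_bound[OF C ab ta])
      also have "\<dots> \<le> K * rho ^ N" using len K0 by (intro mult_left_mono)
      finally show ?thesis .
    qed
  qed
  have "(\<lambda>N. KN N t s - H 0 (min t s)) \<longlonglongrightarrow> 0"
  proof (rule Lim_null_comparison)
    show "\<forall>\<^sub>F N in sequentially. norm (KN N t s - H 0 (min t s)) \<le> K * rho ^ N" using bnd by simp
    show "(\<lambda>N. K * rho ^ N) \<longlonglongrightarrow> 0" using rho by (intro tendsto_mult_right_zero LIMSEQ_power_zero) auto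
  qed
  then show ?thesis by (rule LIM_zero_cancel)
qed

end

lemma std_normal_facts:
  assumes D: "distributed M lborel X (\<lambda>x. ennreal (std_normal_density x))"
  shows "integrable M X" "integral\<^sup>L M X = 0" "integrable M (\<lambda>x. (X x)^2)" "integral\<^sup>L M (\<lambda>x. (X x)^2) = 1"
proof -
  show "integrable M X"
    using distributed_integrable[OF D, of "\<lambda>x. x"] integrable_std_normal_moment[of 1] by simp
  have "integral\<^sup>L M X = integral\<^sup>L lborel (\<lambda>x. std_normal_density x * x)"
    using distributed_integral[OF D, of "\<lambda>x. x"] by simp
  also have "\<dots> = 0" using integral_std_normal_moment_odd[of 0] by simp
  finally show "integral\<^sup>L M X = 0" .
  show "integrable M (\<lambda>x. (X x)^2)"
    using distributed_integrable[OF D, of "\<lambda>x. x^2"] integrable_std_normal_moment[of 2] by simp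
  have "integral\<^sup>L M (\<lambda>x. (X x)^2) = integral\<^sup>L lborel (\<lambda>x. std_normal_density x * x^2)"
    using distributed_integral[OF D, of "\<lambda>x. x^2"] by simp
  also have "\<dots> = 1" using integral_std_normal_moment_even[of 1] by simp
  finally show "integral\<^sup>L M (\<lambda>x. (X x)^2) = 1" .
qed

lemma (in prob_space) indep_two_zero:
  fixes Z :: "'i \<Rightarrow> 'a \<Rightarrow> real"
  assumes ind: "indep_vars (\<lambda>_. borel) Z {i1, i2}" and ne: "i1 \<noteq> i2"
    and int: "integrable M (Z i1)" "integrable M (Z i2)" and z: "integral\<^sup>L M (Z i1) = 0"
  shows "integrable M (\<lambda>\<omega>. Z i1 \<omega> * Z i2 \<omega>)" "integral\<^sup>L M (\<lambda>\<omega>. Z i1 \<omega> * Z i2 \<omega>) = 0"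
proof -
  have fin: "finite {i1, i2}" by simp
  have ints: "\<And>i. i \<in> {i1, i2} \<Longrightarrow> integrable M (Z i)" using int by auto
  have eq: "(\<lambda>\<omega>. \<Prod>i\<in>{i1, i2}. Z i \<omega>) = (\<lambda>\<omega>. Z i1 \<omega> * Z i2 \<omega>)" using ne by simp
  show "integrable M (\<lambda>\<omega>. Z i1 \<omega> * Z i2 \<omega>)"
    using indep_vars_integrable[OF fin ind ints] unfolding eq .
  show "integral\<^sup>L M (\<lambda>\<omega>. Z i1 \<omega> * Z i2 \<omega>) = 0"
    using indep_vars_lebesgue_integral[OF fin ind ints] ne z unfolding eq by simp
qed

locale gauss = prob_space M for M :: "'a measure" +
  fixes Xi :: "nat \<times> nat \<Rightarrow> 'a \<Rightarrow> real^'d"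
  assumes Xi_indep: "indep_vars (\<lambda>_. borel) Xi idx"
    and Xi_gauss: "\<And>p. p \<in> idx \<Longrightarrow> std_gauss_vec M (Xi p)"
begin

definition xi :: "(nat \<times> nat) \<times> 'd \<Rightarrow> 'a \<Rightarrow> real" where
  "xi x \<omega> = Xi (fst x) \<omega> $ snd x"

lemma Xi_meas: "p \<in> idx \<Longrightarrow> Xi p \<in> borel_measurable M"
  using Xi_indep unfolding indep_vars_def by auto

lemma vec_nth_meas: "(\<lambda>v::real^'n. v $ a) \<in> borel_measurable borel"
  by (intro borel_measurable_continuous_onI continuous_on_component continuous_on_id)

lemma xi_meas: "fst x \<in> idx \<Longrightarrow> xi x \<in> borel_measurable M"
  unfolding xi_def[abs_def] using measurable_compose[OF Xi_meas[of "fst x"] vec_nth_meas[of "snd x"]] by simp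

lemma xi_facts:
  assumes "fst x \<in> idx"
  shows "integrable M (xi x)" "integral\<^sup>L M (xi x) = 0" "integrable M (\<lambda>\<omega>. (xi x \<omega>)^2)" "integral\<^sup>L M (\<lambda>\<omega>. (xi x \<omega>)^2) = 1"
  using std_normal_facts[of M "\<lambda>\<omega>. Xi (fst x) \<omega> $ snd x"] Xi_gauss[OF assms]
  unfolding std_gauss_vec_def xi_def by auto

lemma xi_cross:
  assumes x: "fst x \<in> idx" and y: "fst y \<in> idx" and ne: "x \<noteq> y"
  shows "integrable M (\<lambda>\<omega>. xi x \<omega> * xi y \<omega>)" "integral\<^sup>L M (\<lambda>\<omega>. xi x \<omega> * xi y \<omega>) = 0"
proof -
  have "integrable M (\<lambda>\<omega>. xi x \<omega> * xi y \<omega>) \<and> integral\<^sup>L M (\<lambda>\<omega>. xi x \<omega> * xi y \<omega>) = 0"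
  proof (cases "fst x = fst y")
    case False
    define c where "c i = (if i = fst x then snd x else snd y)" for i
    have ind0: "indep_vars (\<lambda>_. borel) Xi {fst x, fst y}"
      by (rule indep_vars_subset[OF Xi_indep]) (use x y in auto)
    have ind: "indep_vars (\<lambda>_. borel) (\<lambda>i \<omega>. Xi i \<omega> $ c i) {fst x, fst y}"
      by (rule indep_vars_compose2[OF ind0]) (auto intro: vec_nth_meas)
    have e1: "c (fst x) = snd x" "c (fst y) = snd y" using False by (auto simp: c_def)
    show ?thesis
      using indep_two_zero[OF ind False] xi_facts[OF x] xi_facts[OF y] unfolding e1 by (simp add: xi_def[abs_def])
  next
    case True
    then have sne: "snd x \<noteq> snd y" using ne by (metis prod.expand)
    have ind0: "indep_vars (\<lambda>_. borel) (\<lambda>j \<omega>. Xi (fst x) \<omega> $ j) UNIV"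
      using Xi_gauss[OF x] unfolding std_gauss_vec_def by auto
    have ind: "indep_vars (\<lambda>_. borel) (\<lambda>j \<omega>. Xi (fst x) \<omega> $ j) {snd x, snd y}"
      by (rule indep_vars_subset[OF ind0]) auto
    show ?thesis
      using indep_two_zero[OF ind sne] xi_facts[OF x] xi_facts[OF y] True by (simp add: xi_def[abs_def])
  qed
  then show "integrable M (\<lambda>\<omega>. xi x \<omega> * xi y \<omega>)" "integral\<^sup>L M (\<lambda>\<omega>. xi x \<omega> * xi y \<omega>) = 0" by auto
qed

lemma xi_prod:
  assumes x: "fst x \<in> idx" and y: "fst y \<in> idx"
  shows "integrable M (\<lambda>\<omega>. xi x \<omega> * xi y \<omega>)" "integral\<^sup>L M (\<lambda>\<omega>. xi x \<omega> * xi y \<omega>) = (if x = y then 1 else 0)"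
proof -
  show "integrable M (\<lambda>\<omega>. xi x \<omega> * xi y \<omega>)"
    using xi_cross[OF x y] xi_facts(3)[OF x] by (cases "x = y") (auto simp: power2_eq_square)
  show "integral\<^sup>L M (\<lambda>\<omega>. xi x \<omega> * xi y \<omega>) = (if x = y then 1 else 0)"
    using xi_cross[OF x y] xi_facts(4)[OF x] by (cases "x = y") (auto simp: power2_eq_square)
qed

definition lc :: "((nat \<times> nat) \<times> 'd) set \<Rightarrow> ((nat \<times> nat) \<times> 'd \<Rightarrow> real) \<Rightarrow> 'a \<Rightarrow> real" where
  "lc P c \<omega> = (\<Sum>x\<in>P. c x * xi x \<omega>)"

lemma lc_meas: "finite P \<Longrightarrow> fst ` P \<subseteq> idx \<Longrightarrow> lc P c \<in> borel_measurable M"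
  unfolding lc_def by (intro borel_measurable_sum borel_measurable_times borel_measurable_const xi_meas) auto

lemma lc_prod:
  assumes P: "finite P" "fst ` P \<subseteq> idx"
  shows "integrable M (\<lambda>\<omega>. lc P c \<omega> * lc P d \<omega>)" "integral\<^sup>L M (\<lambda>\<omega>. lc P c \<omega> * lc P d \<omega>) = (\<Sum>x\<in>P. c x * d x)"
proof -
  have eq: "(\<lambda>\<omega>. lc P c \<omega> * lc P d \<omega>) = (\<lambda>\<omega>. \<Sum>x\<in>P. \<Sum>y\<in>P. (c x * d y) * (xi x \<omega> * xi y \<omega>))"
    unfolding lc_def by (simp add: sum_product mult_ac)
  have int: "integrable M (\<lambda>\<omega>. (c x * d y) * (xi x \<omega> * xi y \<omega>))" if "x \<in> P" "y \<in> P" for x y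
    using xi_prod(1)[of x y] that P by auto
  show "integrable M (\<lambda>\<omega>. lc P c \<omega> * lc P d \<omega>)" unfolding eq
    by (rule Bochner_Integration.integrable_sum, rule Bochner_Integration.integrable_sum, rule int)
  have "integral\<^sup>L M (\<lambda>\<omega>. lc P c \<omega> * lc P d \<omega>) = (\<Sum>x\<in>P. \<Sum>y\<in>P. integral\<^sup>L M (\<lambda>\<omega>. (c x * d y) * (xi x \<omega> * xi y \<omega>)))"
  proof -
    have "integral\<^sup>L M (\<lambda>\<omega>. \<Sum>x\<in>P. \<Sum>y\<in>P. (c x * d y) * (xi x \<omega> * xi y \<omega>))
        = (\<Sum>x\<in>P. integral\<^sup>L M (\<lambda>\<omega>. \<Sum>y\<in>P. (c x * d y) * (xi x \<omega> * xi y \<omega>)))"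
      by (rule Bochner_Integration.integral_sum, rule Bochner_Integration.integrable_sum, rule int)
    also have "\<dots> = (\<Sum>x\<in>P. \<Sum>y\<in>P. integral\<^sup>L M (\<lambda>\<omega>. (c x * d y) * (xi x \<omega> * xi y \<omega>)))"
      by (intro sum.cong refl Bochner_Integration.integral_sum int)
    finally show ?thesis unfolding eq .
  qed
  also have "\<dots> = (\<Sum>x\<in>P. \<Sum>y\<in>P. (c x * d y) * (if x = y then 1 else 0))"
  proof (intro sum.cong refl)
    fix x y assume xy: "x \<in> P" "y \<in> P"
    have "fst x \<in> idx" "fst y \<in> idx" using xy P by auto
    then show "integral\<^sup>L M (\<lambda>\<omega>. (c x * d y) * (xi x \<omega> * xi y \<omega>)) = (c x * d y) * (if x = y then 1 else 0)"
      using xi_prod(2) by simp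
  qed
  also have "\<dots> = (\<Sum>x\<in>P. c x * d x)"
    using P by (simp add: if_distrib[of "\<lambda>z. _ * z"] cong: if_cong)
  finally show "integral\<^sup>L M (\<lambda>\<omega>. lc P c \<omega> * lc P d \<omega>) = (\<Sum>x\<in>P. c x * d x)" .
qed

end

lemma discr:
  fixes a b c :: real
  assumes "\<And>x. 0 \<le> x^2 * a + 2 * x * b + c" and a: "0 \<le> a"
  shows "b^2 \<le> a * c"
proof (cases "a = 0")
  case False
  then have ap: "a > 0" using a by simp
  have "0 \<le> (- b / a)^2 * a + 2 * (- b / a) * b + c" by (rule assms)
  also have "\<dots> = c - b^2 / a" using ap by (simp add: power2_eq_square field_simps)
  finally have "b^2 / a \<le> c" by simp
  then show ?thesis using ap by (simp add: divide_le_eq mult.commute)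
next
  case True
  show ?thesis
  proof (rule ccontr)
    assume "\<not> ?thesis"
    then have b: "b \<noteq> 0" using True by simp
    have "0 \<le> (- (c + 1) / (2 * b))^2 * a + 2 * (- (c + 1) / (2 * b)) * b + c" by (rule assms)
    also have "\<dots> = -1" using True b by (simp add: field_simps)
    finally show False by simp
  qed
qed

lemma cs_int:
  fixes U V :: "'a \<Rightarrow> real"
  assumes U: "U \<in> borel_measurable M" and V: "V \<in> borel_measurable M"
    and U2: "integrable M (\<lambda>x. (U x)^2)" and V2: "integrable M (\<lambda>x. (V x)^2)"
  shows "integrable M (\<lambda>x. U x * V x)"
    "\<bar>integral\<^sup>L M (\<lambda>x. U x * V x)\<bar> \<le> sqrt (integral\<^sup>L M (\<lambda>x. (U x)^2)) * sqrt (integral\<^sup>L M (\<lambda>x. (V x)^2))"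
proof -
  show int: "integrable M (\<lambda>x. U x * V x)"
  proof (rule Bochner_Integration.integrable_bound[of _ "\<lambda>x. (U x)^2 + (V x)^2"])
    show "integrable M (\<lambda>x. (U x)^2 + (V x)^2)" using U2 V2 by simp
    show "(\<lambda>x. U x * V x) \<in> borel_measurable M" using U V by measurable
    show "AE x in M. norm (U x * V x) \<le> norm ((U x)^2 + (V x)^2)"
    proof (rule AE_I2)
      fix x
      have "2 * \<bar>U x * V x\<bar> \<le> (U x)^2 + (V x)^2"
        using sum_squares_bound[of "\<bar>U x\<bar>" "\<bar>V x\<bar>"] by (simp add: abs_mult power2_abs)
      then show "norm (U x * V x) \<le> norm ((U x)^2 + (V x)^2)" by simp
    qed
  qed
  define a where "a = integral\<^sup>L M (\<lambda>x. (U x)^2)"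
  define b where "b = integral\<^sup>L M (\<lambda>x. U x * V x)"
  define c where "c = integral\<^sup>L M (\<lambda>x. (V x)^2)"
  have a0: "0 \<le> a" unfolding a_def by simp
  have c0: "0 \<le> c" unfolding c_def by simp
  have q: "0 \<le> y^2 * a + 2 * y * b + c" for y
  proof -
    have "0 \<le> integral\<^sup>L M (\<lambda>x. (y * U x + V x)^2)" by simp
    also have "(\<lambda>x. (y * U x + V x)^2) = (\<lambda>x. y^2 * (U x)^2 + 2 * y * (U x * V x) + (V x)^2)"
      by (simp add: power2_eq_square algebra_simps)
    also have "integral\<^sup>L M \<dots> = y^2 * a + 2 * y * b + c"
      unfolding a_def b_def c_def using U2 V2 int by simp
    finally show ?thesis .
  qed
  have "b^2 \<le> a * c" by (rule discr[OF q a0])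
  then have "sqrt (b^2) \<le> sqrt (a * c)" by (rule real_sqrt_le_mono)
  then show "\<bar>integral\<^sup>L M (\<lambda>x. U x * V x)\<bar> \<le> sqrt (integral\<^sup>L M (\<lambda>x. (U x)^2)) * sqrt (integral\<^sup>L M (\<lambda>x. (V x)^2))"
    by (simp add: a_def b_def c_def real_sqrt_mult)
qed


locale full = setting alpha F sG l mp r rho sig + gauss M Xi
  for alpha :: "real \<Rightarrow> real^'d^'d" and F sG l mp r rho sig and M :: "'a measure" and Xi :: "nat \<times> nat \<Rightarrow> 'a \<Rightarrow> real^'d" +
  fixes Xinf :: "real \<Rightarrow> 'a \<Rightarrow> real^'d"
  assumes Xinf_meas: "\<And>t'. Xinf t' \<in> borel_measurable M"
    and Xinf_lim: "AE \<omega> in M. \<forall>t'\<in>{0..1}.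
           (\<lambda>N. XN F sG l mp r sig Xi N t' \<omega>) \<longlonglongrightarrow> Xinf t' \<omega>"
begin

abbreviation "XNv \<equiv> XN F sG l mp r sig Xi"
abbreviation "ps \<equiv> psi F sG l mp r sig"

definition CN :: "nat \<Rightarrow> real \<Rightarrow> real \<Rightarrow> real^'d^'d" where
  "CN N t s = (\<Sum>p\<in>idxN N. ps (fst p) (snd p) t ** transpose (ps (fst p) (snd p) s))"

definition Cov :: "real \<Rightarrow> real \<Rightarrow> real^'d^'d" where
  "Cov t s = G t ** H 0 (min t s) ** transpose (G s)"

definition cf :: "real \<Rightarrow> 'd \<Rightarrow> (nat \<times> nat) \<times> 'd \<Rightarrow> real" where
  "cf t i x = ps (fst (fst x)) (snd (fst x)) t $ i $ snd x"

lemma PU: "finite (idxN N \<times> (UNIV::'d set))" "fst ` (idxN N \<times> (UNIV::'d set)) \<subseteq> idx"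
  using finite_idxN idxN_idx by auto

lemma PUd: "finite ((idxN N' - idxN N) \<times> (UNIV::'d set))" "fst ` ((idxN N' - idxN N) \<times> (UNIV::'d set)) \<subseteq> idx"
  using finite_idxN idxN_idx by auto

lemma XN_comp: "XNv N t \<omega> $ i = lc (idxN N \<times> UNIV) (cf t i) \<omega>"
  unfolding XN_def lc_def cf_def xi_def
  by (simp add: matrix_vector_mult_def sum.cartesian_product split_def)

lemma XN_meas: "(\<lambda>\<omega>. XNv N t \<omega> $ i) \<in> borel_measurable M"
  unfolding XN_comp by (rule lc_meas[OF PU])

lemma Xinf_meas': "(\<lambda>\<omega>. Xinf t \<omega> $ i) \<in> borel_measurable M"
  using measurable_compose[OF Xinf_meas vec_nth_meas] by simp

lemma XN_diff: "N \<le> N' \<Longrightarrow> XNv N' t \<omega> $ i - XNv N t \<omega> $ i = lc ((idxN N' - idxN N) \<times> UNIV) (cf t i) \<omega>"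
proof -
  assume NN: "N \<le> N'"
  have "(idxN N' - idxN N) \<times> (UNIV::'d set) = idxN N' \<times> UNIV - idxN N \<times> UNIV" by auto
  moreover have "idxN N \<times> (UNIV::'d set) \<subseteq> idxN N' \<times> UNIV" using idxN_mono[OF NN] by auto
  ultimately show ?thesis unfolding XN_comp lc_def
    by (simp add: sum_diff PU)
qed

lemma CN_entry: "CN N t s $ i $ j = (\<Sum>x\<in>idxN N \<times> UNIV. cf t i x * cf s j x)"
  unfolding CN_def cf_def
  by (simp add: matrix_matrix_mult_def transpose_def sum.cartesian_product split_def)

lemma CN_eq: "CN N t s = G t ** KN N t s ** transpose (G s)"
proof -
  have "CN N t s = (\<Sum>p\<in>idxN N. G t ** (phi (fst p) (snd p) t ** transpose (phi (fst p) (snd p) s)) ** transpose (G s))"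
    unfolding CN_def psi_eq by (simp add: matrix_transpose_mul matrix_mul_assoc)
  also have "\<dots> = G t ** KN N t s ** transpose (G s)"
    unfolding KN_def
  proof -
    have bl: "bounded_linear (\<lambda>X::real^'d^'d. G t ** X ** transpose (G s))"
      by (rule bounded_linear_compose[OF bl_rmul bl_lmul])
    show "(\<Sum>p\<in>idxN N. G t ** (phi (fst p) (snd p) t ** transpose (phi (fst p) (snd p) s)) ** transpose (G s))
      = G t ** (\<Sum>p\<in>idxN N. phi (fst p) (snd p) t ** transpose (phi (fst p) (snd p) s)) ** transpose (G s)"
      using linear_sum[OF bounded_linear.linear[OF bl]] by metis
  qed
  finally show ?thesis .
qed

lemma CN_lim: "t \<in> {0..1} \<Longrightarrow> s \<in> {0..1} \<Longrightarrow> (\<lambda>N. CN N t s) \<longlonglongrightarrow> Cov t s"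
proof -
  assume ts: "t \<in> {0..1}" "s \<in> {0..1}"
  have bl: "bounded_linear (\<lambda>X::real^'d^'d. G t ** X ** transpose (G s))"
    by (rule bounded_linear_compose[OF bl_rmul bl_lmul])
  show ?thesis unfolding CN_eq Cov_def
    by (rule bounded_linear.tendsto[OF bl KN_lim[OF ts]])
qed

lemma CN_lim_entry: "t \<in> {0..1} \<Longrightarrow> s \<in> {0..1} \<Longrightarrow> (\<lambda>N. CN N t s $ i $ j) \<longlonglongrightarrow> Cov t s $ i $ j"
  by (intro tendsto_vec_nth CN_lim)

lemma X_cross: "integrable M (\<lambda>\<omega>. XNv N t \<omega> $ i * XNv N s \<omega> $ j)"
  "integral\<^sup>L M (\<lambda>\<omega>. XNv N t \<omega> $ i * XNv N s \<omega> $ j) = CN N t s $ i $ j"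
  unfolding XN_comp CN_entry using lc_prod[OF PU] by auto

lemma X_sq: "integrable M (\<lambda>\<omega>. (XNv N t \<omega> $ i)^2)"
  "integral\<^sup>L M (\<lambda>\<omega>. (XNv N t \<omega> $ i)^2) = CN N t t $ i $ i"
  using X_cross[of N t i t i] by (simp_all add: power2_eq_square)

lemma X_diff_sq:
  assumes "N \<le> N'"
  shows "integrable M (\<lambda>\<omega>. (XNv N' t \<omega> $ i - XNv N t \<omega> $ i)^2)"
    "integral\<^sup>L M (\<lambda>\<omega>. (XNv N' t \<omega> $ i - XNv N t \<omega> $ i)^2) = CN N' t t $ i $ i - CN N t t $ i $ i"
proof -
  note e = XN_diff[OF assms]
  show "integrable M (\<lambda>\<omega>. (XNv N' t \<omega> $ i - XNv N t \<omega> $ i)^2)"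
    unfolding e using lc_prod(1)[OF PUd] by (simp add: power2_eq_square)
  have "integral\<^sup>L M (\<lambda>\<omega>. (XNv N' t \<omega> $ i - XNv N t \<omega> $ i)^2)
      = (\<Sum>x\<in>(idxN N' - idxN N) \<times> UNIV. cf t i x * cf t i x)"
    unfolding e using lc_prod(2)[OF PUd] by (simp add: power2_eq_square)
  also have "\<dots> = (\<Sum>x\<in>idxN N' \<times> UNIV. cf t i x * cf t i x) - (\<Sum>x\<in>idxN N \<times> UNIV. cf t i x * cf t i x)"
  proof -
    have "(idxN N' - idxN N) \<times> (UNIV::'d set) = idxN N' \<times> UNIV - idxN N \<times> UNIV" by auto
    moreover have "idxN N \<times> (UNIV::'d set) \<subseteq> idxN N' \<times> UNIV" using idxN_mono[OF assms] by auto
    ultimately show ?thesis by (simp add: sum_diff PU)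
  qed
  finally show "integral\<^sup>L M (\<lambda>\<omega>. (XNv N' t \<omega> $ i - XNv N t \<omega> $ i)^2) = CN N' t t $ i $ i - CN N t t $ i $ i"
    unfolding CN_entry .
qed

end

context full begin

lemma D_sq:
  assumes t: "t \<in> {0..1}"
  shows "integrable M (\<lambda>\<omega>. (Xinf t \<omega> $ i - XNv N t \<omega> $ i)^2)"
    "integral\<^sup>L M (\<lambda>\<omega>. (Xinf t \<omega> $ i - XNv N t \<omega> $ i)^2) \<le> max (Cov t t $ i $ i - CN N t t $ i $ i) 0"
proof -
  define e where "e = Cov t t $ i $ i - CN N t t $ i $ i"
  define f where "f K \<omega> = (XNv (K + N) t \<omega> $ i - XNv N t \<omega> $ i)^2" for K \<omega>
  define Dsq where "Dsq \<omega> = (Xinf t \<omega> $ i - XNv N t \<omega> $ i)^2" for \<omega>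
  have meas: "Dsq \<in> borel_measurable M" unfolding Dsq_def
    using Xinf_meas'[of t i] XN_meas[of N t i] by measurable
  have fmeas: "(\<lambda>\<omega>. ennreal (f K \<omega>)) \<in> borel_measurable M" for K unfolding f_def
    using XN_meas[of "K + N" t i] XN_meas[of N t i] by measurable
  have AEl: "AE \<omega> in M. liminf (\<lambda>K. ennreal (f K \<omega>)) = ennreal (Dsq \<omega>)"
    using Xinf_lim
  proof (rule AE_mp, intro AE_I2 impI)
    fix \<omega> assume "\<forall>t'\<in>{0..1}. (\<lambda>N. XNv N t' \<omega>) \<longlonglongrightarrow> Xinf t' \<omega>"
    then have "(\<lambda>K. XNv K t \<omega>) \<longlonglongrightarrow> Xinf t \<omega>" using t by auto
    then have "(\<lambda>K. XNv (K + N) t \<omega>) \<longlonglongrightarrow> Xinf t \<omega>" by (rule LIMSEQ_ignore_initial_segment)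
    then have "(\<lambda>K. f K \<omega>) \<longlonglongrightarrow> Dsq \<omega>" unfolding f_def Dsq_def
      by (intro tendsto_intros)
    then have "(\<lambda>K. ennreal (f K \<omega>)) \<longlonglongrightarrow> ennreal (Dsq \<omega>)" by (rule tendsto_ennrealI)
    then show "liminf (\<lambda>K. ennreal (f K \<omega>)) = ennreal (Dsq \<omega>)"
      by (intro lim_imp_Liminf) auto
  qed
  have "(\<integral>\<^sup>+\<omega>. ennreal (Dsq \<omega>) \<partial>M) = (\<integral>\<^sup>+\<omega>. liminf (\<lambda>K. ennreal (f K \<omega>)) \<partial>M)"
    by (rule nn_integral_cong_AE) (use AEl in auto)
  also have "\<dots> \<le> liminf (\<lambda>K. \<integral>\<^sup>+\<omega>. ennreal (f K \<omega>) \<partial>M)"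
    by (rule nn_integral_liminf) (rule fmeas)
  also have "(\<lambda>K. \<integral>\<^sup>+\<omega>. ennreal (f K \<omega>) \<partial>M) = (\<lambda>K. ennreal (CN (K + N) t t $ i $ i - CN N t t $ i $ i))"
  proof
    fix K
    have "(\<integral>\<^sup>+\<omega>. ennreal (f K \<omega>) \<partial>M) = ennreal (integral\<^sup>L M (f K))"
      by (rule nn_integral_eq_integral) (use X_diff_sq(1)[of N "K + N" t i] in \<open>auto simp: f_def[abs_def]\<close>)
    also have "integral\<^sup>L M (f K) = CN (K + N) t t $ i $ i - CN N t t $ i $ i"
      using X_diff_sq(2)[of N "K + N" t i] by (simp add: f_def[abs_def])
    finally show "(\<integral>\<^sup>+\<omega>. ennreal (f K \<omega>) \<partial>M) = ennreal (CN (K + N) t t $ i $ i - CN N t t $ i $ i)" .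
  qed
  also have "liminf (\<lambda>K. ennreal (CN (K + N) t t $ i $ i - CN N t t $ i $ i)) = ennreal e"
  proof (intro lim_imp_Liminf)
    have "(\<lambda>K. CN (K + N) t t $ i $ i) \<longlonglongrightarrow> Cov t t $ i $ i"
      using LIMSEQ_ignore_initial_segment[OF CN_lim_entry[OF t t, of i i], of N] .
    then show "(\<lambda>K. ennreal (CN (K + N) t t $ i $ i - CN N t t $ i $ i)) \<longlonglongrightarrow> ennreal e"
      unfolding e_def by (rule tendsto_ennrealI[OF tendsto_diff[OF _ tendsto_const]])
  qed auto
  finally have nn: "(\<integral>\<^sup>+\<omega>. ennreal (Dsq \<omega>) \<partial>M) \<le> ennreal e" .
  have AEnn: "AE \<omega> in M. 0 \<le> Dsq \<omega>" by (simp add: Dsq_def)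
  show int: "integrable M (\<lambda>\<omega>. (Xinf t \<omega> $ i - XNv N t \<omega> $ i)^2)"
    unfolding Dsq_def[symmetric]
    by (rule integrableI_nonneg[OF meas AEnn]) (use nn in \<open>auto simp: top_unique less_top[symmetric] intro: le_less_trans\<close>)
  have "integral\<^sup>L M Dsq = enn2real (\<integral>\<^sup>+\<omega>. ennreal (Dsq \<omega>) \<partial>M)"
    by (rule integral_eq_nn_integral[OF meas AEnn])
  also have "\<dots> \<le> enn2real (ennreal e)" by (rule enn2real_mono[OF nn]) simp
  also have "\<dots> = max e 0" by (cases "e \<ge> 0") (auto simp: ennreal_neg)
  finally show "integral\<^sup>L M (\<lambda>\<omega>. (Xinf t \<omega> $ i - XNv N t \<omega> $ i)^2) \<le> max (Cov t t $ i $ i - CN N t t $ i $ i) 0"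
    unfolding Dsq_def e_def .
qed

end

context full begin

lemma sq_int:
  assumes t: "t \<in> {0..1}"
  shows "integrable M (\<lambda>\<omega>. (Xinf t \<omega> $ i)^2)"
proof -
  have m1: "(\<lambda>\<omega>. Xinf t \<omega> $ i - XNv 0 t \<omega> $ i) \<in> borel_measurable M"
    using Xinf_meas'[of t i] XN_meas[of 0 t i] by measurable
  have c: "integrable M (\<lambda>\<omega>. (Xinf t \<omega> $ i - XNv 0 t \<omega> $ i) * XNv 0 t \<omega> $ i)"
    by (rule cs_int(1)[OF m1 XN_meas D_sq(1)[OF t] X_sq(1)])
  have "integrable M (\<lambda>\<omega>. (Xinf t \<omega> $ i - XNv 0 t \<omega> $ i)^2 + 2 * ((Xinf t \<omega> $ i - XNv 0 t \<omega> $ i) * XNv 0 t \<omega> $ i) + (XNv 0 t \<omega> $ i)^2)"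
    using D_sq(1)[OF t, of i 0] c X_sq(1)[of 0 t i] by simp
  also have "(\<lambda>\<omega>. (Xinf t \<omega> $ i - XNv 0 t \<omega> $ i)^2 + 2 * ((Xinf t \<omega> $ i - XNv 0 t \<omega> $ i) * XNv 0 t \<omega> $ i) + (XNv 0 t \<omega> $ i)^2)
     = (\<lambda>\<omega>. (Xinf t \<omega> $ i)^2)" by (simp add: power2_eq_square algebra_simps)
  finally show ?thesis .
qed

lemma entry_main:
  assumes t: "t \<in> {0..1}" and s: "s \<in> {0..1}"
  shows "integrable M (\<lambda>\<omega>. Xinf t \<omega> $ i * Xinf s \<omega> $ j)"
    "integral\<^sup>L M (\<lambda>\<omega>. Xinf t \<omega> $ i * Xinf s \<omega> $ j) = Cov t s $ i $ j"
proof -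
  define A where "A \<omega> = Xinf t \<omega> $ i" for \<omega>
  define B where "B \<omega> = Xinf s \<omega> $ j" for \<omega>
  define An where "An N \<omega> = XNv N t \<omega> $ i" for N \<omega>
  define Bn where "Bn N \<omega> = XNv N s \<omega> $ j" for N \<omega>
  define DA where "DA N \<omega> = A \<omega> - An N \<omega>" for N \<omega>
  define DB where "DB N \<omega> = B \<omega> - Bn N \<omega>" for N \<omega>
  define eA where "eA N = max (Cov t t $ i $ i - CN N t t $ i $ i) 0" for N
  define eB where "eB N = max (Cov s s $ j $ j - CN N s s $ j $ j) 0" for N
  have mA: "A \<in> borel_measurable M" unfolding A_def by (rule Xinf_meas')
  have mB: "B \<in> borel_measurable M" unfolding B_def by (rule Xinf_meas')
  have mAn: "An N \<in> borel_measurable M" for N unfolding An_def[abs_def] by (rule XN_meas)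
  have mBn: "Bn N \<in> borel_measurable M" for N unfolding Bn_def[abs_def] by (rule XN_meas)
  have mDA: "DA N \<in> borel_measurable M" for N unfolding DA_def[abs_def] using mA mAn[of N] by measurable
  have mDB: "DB N \<in> borel_measurable M" for N unfolding DB_def[abs_def] using mB mBn[of N] by measurable
  have iA: "integrable M (\<lambda>\<omega>. (A \<omega>)^2)" unfolding A_def by (rule sq_int[OF t])
  have iB: "integrable M (\<lambda>\<omega>. (B \<omega>)^2)" unfolding B_def by (rule sq_int[OF s])
  have iAn: "integrable M (\<lambda>\<omega>. (An N \<omega>)^2)" "integral\<^sup>L M (\<lambda>\<omega>. (An N \<omega>)^2) = CN N t t $ i $ i" for N
    unfolding An_def using X_sq by auto
  have iBn: "integrable M (\<lambda>\<omega>. (Bn N \<omega>)^2)" "integral\<^sup>L M (\<lambda>\<omega>. (Bn N \<omega>)^2) = CN N s s $ j $ j" for N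
    unfolding Bn_def using X_sq by auto
  have iDA: "integrable M (\<lambda>\<omega>. (DA N \<omega>)^2)" "integral\<^sup>L M (\<lambda>\<omega>. (DA N \<omega>)^2) \<le> eA N" for N
    unfolding DA_def A_def An_def eA_def using D_sq[OF t] by auto
  have iDB: "integrable M (\<lambda>\<omega>. (DB N \<omega>)^2)" "integral\<^sup>L M (\<lambda>\<omega>. (DB N \<omega>)^2) \<le> eB N" for N
    unfolding DB_def B_def Bn_def eB_def using D_sq[OF s] by auto
  show iAB: "integrable M (\<lambda>\<omega>. Xinf t \<omega> $ i * Xinf s \<omega> $ j)"
    using cs_int(1)[OF mA mB iA iB] unfolding A_def B_def .
  have cs1: "\<bar>integral\<^sup>L M (\<lambda>\<omega>. DA N \<omega> * DB N \<omega>)\<bar> \<le> sqrt (eA N) * sqrt (eB N)"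
    and cs2: "\<bar>integral\<^sup>L M (\<lambda>\<omega>. DA N \<omega> * Bn N \<omega>)\<bar> \<le> sqrt (eA N) * sqrt (CN N s s $ j $ j)"
    and cs3: "\<bar>integral\<^sup>L M (\<lambda>\<omega>. An N \<omega> * DB N \<omega>)\<bar> \<le> sqrt (CN N t t $ i $ i) * sqrt (eB N)" for N
  proof -
    have sA: "sqrt (integral\<^sup>L M (\<lambda>\<omega>. (DA N \<omega>)^2)) \<le> sqrt (eA N)" using iDA(2) by (rule real_sqrt_le_mono)
    have sB: "sqrt (integral\<^sup>L M (\<lambda>\<omega>. (DB N \<omega>)^2)) \<le> sqrt (eB N)" using iDB(2) by (rule real_sqrt_le_mono)
    have p: "0 \<le> sqrt (integral\<^sup>L M (\<lambda>\<omega>. (DA N \<omega>)^2))" "0 \<le> sqrt (integral\<^sup>L M (\<lambda>\<omega>. (DB N \<omega>)^2))"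
      "0 \<le> sqrt (eA N)" "0 \<le> sqrt (eB N)" "0 \<le> sqrt (CN N s s $ j $ j)" "0 \<le> sqrt (CN N t t $ i $ i)"
      by (simp_all add: eA_def eB_def iBn(2)[symmetric] iAn(2)[symmetric])
    show "\<bar>integral\<^sup>L M (\<lambda>\<omega>. DA N \<omega> * DB N \<omega>)\<bar> \<le> sqrt (eA N) * sqrt (eB N)"
      using cs_int(2)[OF mDA[of N] mDB[of N] iDA(1)[of N] iDB(1)[of N]] mult_mono[OF sA sB p(3) p(2)] by linarith
    show "\<bar>integral\<^sup>L M (\<lambda>\<omega>. DA N \<omega> * Bn N \<omega>)\<bar> \<le> sqrt (eA N) * sqrt (CN N s s $ j $ j)"
      using cs_int(2)[OF mDA[of N] mBn[of N] iDA(1)[of N] iBn(1)[of N]] mult_right_mono[OF sA p(5)] iBn(2)[of N] by simp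
    show "\<bar>integral\<^sup>L M (\<lambda>\<omega>. An N \<omega> * DB N \<omega>)\<bar> \<le> sqrt (CN N t t $ i $ i) * sqrt (eB N)"
      using cs_int(2)[OF mAn[of N] mDB[of N] iAn(1)[of N] iDB(1)[of N]] mult_left_mono[OF sB p(6)] iAn(2)[of N] by simp
  qed
  have split: "integral\<^sup>L M (\<lambda>\<omega>. A \<omega> * B \<omega>) - CN N t s $ i $ j
     = integral\<^sup>L M (\<lambda>\<omega>. DA N \<omega> * DB N \<omega>) + integral\<^sup>L M (\<lambda>\<omega>. DA N \<omega> * Bn N \<omega>)
       + integral\<^sup>L M (\<lambda>\<omega>. An N \<omega> * DB N \<omega>)" for N
  proof -
    have i1: "integrable M (\<lambda>\<omega>. DA N \<omega> * DB N \<omega>)" by (rule cs_int(1)[OF mDA[of N] mDB[of N] iDA(1)[of N] iDB(1)[of N]])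
    have i2: "integrable M (\<lambda>\<omega>. DA N \<omega> * Bn N \<omega>)" by (rule cs_int(1)[OF mDA[of N] mBn[of N] iDA(1)[of N] iBn(1)[of N]])
    have i3: "integrable M (\<lambda>\<omega>. An N \<omega> * DB N \<omega>)" by (rule cs_int(1)[OF mAn[of N] mDB[of N] iAn(1)[of N] iDB(1)[of N]])
    have i4: "integrable M (\<lambda>\<omega>. An N \<omega> * Bn N \<omega>)" "integral\<^sup>L M (\<lambda>\<omega>. An N \<omega> * Bn N \<omega>) = CN N t s $ i $ j"
      unfolding An_def Bn_def using X_cross by auto
    have "(\<lambda>\<omega>. A \<omega> * B \<omega>) = (\<lambda>\<omega>. DA N \<omega> * DB N \<omega> + DA N \<omega> * Bn N \<omega> + An N \<omega> * DB N \<omega> + An N \<omega> * Bn N \<omega>)"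
      by (simp add: DA_def DB_def algebra_simps)
    then have "integral\<^sup>L M (\<lambda>\<omega>. A \<omega> * B \<omega>) = integral\<^sup>L M (\<lambda>\<omega>. DA N \<omega> * DB N \<omega>) + integral\<^sup>L M (\<lambda>\<omega>. DA N \<omega> * Bn N \<omega>)
       + integral\<^sup>L M (\<lambda>\<omega>. An N \<omega> * DB N \<omega>) + integral\<^sup>L M (\<lambda>\<omega>. An N \<omega> * Bn N \<omega>)"
      using i1 i2 i3 i4 by simp
    then show ?thesis using i4(2) by simp
  qed
  define g where "g N = sqrt (eA N) * sqrt (eB N) + sqrt (eA N) * sqrt (CN N s s $ j $ j) + sqrt (CN N t t $ i $ i) * sqrt (eB N)" for N
  have eA0: "eA \<longlonglongrightarrow> 0"
  proof -
    have "(\<lambda>N. max (Cov t t $ i $ i - CN N t t $ i $ i) 0) \<longlonglongrightarrow> max (Cov t t $ i $ i - Cov t t $ i $ i) 0"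
      by (intro tendsto_max tendsto_diff tendsto_const CN_lim_entry t)
    then show ?thesis unfolding eA_def[abs_def] by simp
  qed
  have eB0: "eB \<longlonglongrightarrow> 0"
  proof -
    have "(\<lambda>N. max (Cov s s $ j $ j - CN N s s $ j $ j) 0) \<longlonglongrightarrow> max (Cov s s $ j $ j - Cov s s $ j $ j) 0"
      by (intro tendsto_max tendsto_diff tendsto_const CN_lim_entry s)
    then show ?thesis unfolding eB_def[abs_def] by simp
  qed
  have g0: "g \<longlonglongrightarrow> 0"
  proof -
    have "g \<longlonglongrightarrow> sqrt 0 * sqrt 0 + sqrt 0 * sqrt (Cov s s $ j $ j) + sqrt (Cov t t $ i $ i) * sqrt 0"
      unfolding g_def[abs_def]
      by (intro tendsto_add tendsto_mult tendsto_real_sqrt eA0 eB0 CN_lim_entry t s)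
    then show ?thesis by simp
  qed
  have "(\<lambda>N. integral\<^sup>L M (\<lambda>\<omega>. A \<omega> * B \<omega>) - CN N t s $ i $ j) \<longlonglongrightarrow> 0"
  proof (rule Lim_null_comparison[OF _ g0], rule always_eventually, rule allI)
    fix N
    show "norm (integral\<^sup>L M (\<lambda>\<omega>. A \<omega> * B \<omega>) - CN N t s $ i $ j) \<le> g N"
      unfolding split g_def real_norm_def using cs1[of N] cs2[of N] cs3[of N] by linarith
  qed
  from tendsto_diff[OF tendsto_const this, of "integral\<^sup>L M (\<lambda>\<omega>. A \<omega> * B \<omega>)"]
  have "(\<lambda>N. CN N t s $ i $ j) \<longlonglongrightarrow> integral\<^sup>L M (\<lambda>\<omega>. A \<omega> * B \<omega>)" by simp
  with CN_lim_entry[OF t s, of i j] have "integral\<^sup>L M (\<lambda>\<omega>. A \<omega> * B \<omega>) = Cov t s $ i $ j"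
    using LIMSEQ_unique by blast
  then show "integral\<^sup>L M (\<lambda>\<omega>. Xinf t \<omega> $ i * Xinf s \<omega> $ j) = Cov t s $ i $ j" unfolding A_def B_def .
qed

end

definition munit :: "'n::finite \<Rightarrow> 'n \<Rightarrow> real^'n^'n" where
  "munit i j = (\<chi> a b. if a = i then if b = j then 1 else 0 else 0)"

lemma mat_expand: "(X::real^'n^'n) = (\<Sum>i\<in>UNIV. \<Sum>j\<in>UNIV. X $ i $ j *\<^sub>R munit i j)"
proof -
  have "(\<Sum>i\<in>UNIV. \<Sum>j\<in>UNIV. X $ i $ j *\<^sub>R munit i j) $ a $ b = X $ a $ b" for a b
  proof -
    have e: "\<And>x::real. \<And>P. x * (if P then 1 else 0) = (if P then x else 0)" by simp
    have "(\<Sum>i\<in>UNIV. \<Sum>j\<in>UNIV. X $ i $ j *\<^sub>R munit i j) $ a $ b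
        = (\<Sum>i\<in>UNIV. if a = i then (\<Sum>j\<in>UNIV. if b = j then X $ i $ j else 0) else 0)"
      unfolding sum_component vector_scaleR_component
      by (intro sum.cong refl) (auto simp: munit_def e)
    also have "\<dots> = X $ a $ b" by simp
    finally show ?thesis .
  qed
  then show ?thesis by (simp add: vec_eq_iff)
qed

lemma outer_expand: "outer x y = (\<Sum>i\<in>UNIV. \<Sum>j\<in>UNIV. (x $ i * y $ j) *\<^sub>R munit i j)"
  by (subst mat_expand) (simp add: outer_def)

context full begin

lemma mat_main:
  assumes t: "t \<in> {0..1}" and s: "s \<in> {0..1}"
  shows "integrable M (\<lambda>\<omega>. outer (Xinf t \<omega>) (Xinf s \<omega>)) \<and>
         integral\<^sup>L M (\<lambda>\<omega>. outer (Xinf t \<omega>) (Xinf s \<omega>)) = Cov t s"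
proof -
  have ie: "integrable M (\<lambda>\<omega>. (Xinf t \<omega> $ i * Xinf s \<omega> $ j) *\<^sub>R munit i j)" for i j
    using entry_main(1)[OF t s, of i j] by simp
  have eq: "(\<lambda>\<omega>. outer (Xinf t \<omega>) (Xinf s \<omega>)) = (\<lambda>\<omega>. \<Sum>i\<in>UNIV. \<Sum>j\<in>UNIV. (Xinf t \<omega> $ i * Xinf s \<omega> $ j) *\<^sub>R munit i j)"
    by (simp add: outer_expand)
  have int: "integrable M (\<lambda>\<omega>. outer (Xinf t \<omega>) (Xinf s \<omega>))" unfolding eq
    by (rule Bochner_Integration.integrable_sum, rule Bochner_Integration.integrable_sum, rule ie)
  have "integral\<^sup>L M (\<lambda>\<omega>. outer (Xinf t \<omega>) (Xinf s \<omega>))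
      = (\<Sum>i\<in>UNIV. integral\<^sup>L M (\<lambda>\<omega>. \<Sum>j\<in>UNIV. (Xinf t \<omega> $ i * Xinf s \<omega> $ j) *\<^sub>R munit i j))"
    unfolding eq by (rule Bochner_Integration.integral_sum, rule Bochner_Integration.integrable_sum, rule ie)
  also have "\<dots> = (\<Sum>i\<in>UNIV. \<Sum>j\<in>UNIV. integral\<^sup>L M (\<lambda>\<omega>. (Xinf t \<omega> $ i * Xinf s \<omega> $ j) *\<^sub>R munit i j))"
    by (intro sum.cong refl Bochner_Integration.integral_sum ie)
  also have "\<dots> = (\<Sum>i\<in>UNIV. \<Sum>j\<in>UNIV. Cov t s $ i $ j *\<^sub>R munit i j)"
    by (intro sum.cong refl) (simp add: entry_main[OF t s])
  also have "\<dots> = Cov t s" by (rule mat_expand[symmetric])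
  finally show ?thesis using int by simp
qed

end

theorem lemma4:
  fixes alpha :: "real \<Rightarrow> real^('d::{finite,linorder})^('d::{finite,linorder})"
    and sG :: "real \<Rightarrow> real^('m::finite)^('d::{finite,linorder})"
    and F :: "real \<Rightarrow> real \<Rightarrow> real^('d::{finite,linorder})^('d::{finite,linorder})"
    and rho :: real
    and l mp r :: "nat \<Rightarrow> nat \<Rightarrow> real"
    and sig :: "nat \<Rightarrow> nat \<Rightarrow> real^('d::{finite,linorder})^('d::{finite,linorder})"
    and M :: "'a measure"
    and Xi :: "nat \<times> nat \<Rightarrow> 'a \<Rightarrow> real^('d::{finite,linorder})"
    and Xinf :: "real \<Rightarrow> 'a \<Rightarrow> real^('d::{finite,linorder})"
    and t s :: real
  assumes alpha_cont: "continuous_on {0..1} alpha"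
    and sG_cont: "continuous_on {0..1} sG"
    and flow_deriv: "\<And>s' t'. s' \<in> {0..1} \<Longrightarrow> t' \<in> {0..1} \<Longrightarrow>
           ((\<lambda>x. F s' x) has_vector_derivative (alpha t' ** F s' t')) (at t' within {0..1})"
    and flow_init: "\<And>s'. s' \<in> {0..1} \<Longrightarrow> F s' s' = mat 1"
    and nondeg: "\<And>u v. 0 \<le> u \<Longrightarrow> u < v \<Longrightarrow> v \<le> 1 \<Longrightarrow>
           pos_def_mat (F u v ** hu F sG u u v ** transpose (F u v))"
    and rho: "0 < rho" "rho < 1"
    and part_init: "l 1 0 = 0" "r 1 0 = 1"
    and part_order: "\<And>n k. (n,k) \<in> idx \<Longrightarrow> n \<ge> 1 \<Longrightarrow> l n k < mp n k \<and> mp n k < r n k"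
    and part_left: "\<And>n k. (n,k) \<in> idx \<Longrightarrow> n \<ge> 1 \<Longrightarrow>
           l (n+1) (2*k) = l n k \<and> r (n+1) (2*k) = mp n k"
    and part_right: "\<And>n k. (n,k) \<in> idx \<Longrightarrow> n \<ge> 1 \<Longrightarrow>
           l (n+1) (2*k+1) = mp n k \<and> r (n+1) (2*k+1) = r n k"
    and part_ratio: "\<And>n k. (n,k) \<in> idx \<Longrightarrow> n \<ge> 1 \<Longrightarrow>
           max (r n k - mp n k) (mp n k - l n k) < rho * (r n k - l n k)"
    and sig00: "is_chol (sig 0 0) (gg F 1 ** hh F sG 0 1 ** transpose (gg F 1))"
    and signk: "\<And>n k. (n,k) \<in> idx \<Longrightarrow> n \<ge> 1 \<Longrightarrow>
           is_chol (sig n k) (Sigma_nk F sG (l n k) (mp n k) (r n k))"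
    and M: "prob_space M"
    and Xi_indep: "prob_space.indep_vars M (\<lambda>_. borel) Xi idx"
    and Xi_gauss: "\<And>p. p \<in> idx \<Longrightarrow> std_gauss_vec M (Xi p)"
    and Xinf_meas: "\<And>t'. Xinf t' \<in> borel_measurable M"
    and Xinf_lim: "AE \<omega> in M. \<forall>t'\<in>{0..1}.
           (\<lambda>N. XN F sG l mp r sig Xi N t' \<omega>) \<longlonglongrightarrow> Xinf t' \<omega>"
    and ts: "t \<in> {0..1}" "s \<in> {0..1}"
  shows "integrable M (\<lambda>\<omega>. outer (Xinf t \<omega>) (Xinf s \<omega>)) \<and>
         integral\<^sup>L M (\<lambda>\<omega>. outer (Xinf t \<omega>) (Xinf s \<omega>))
           = gg F t ** hh F sG 0 (min t s) ** transpose (gg F s)"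
proof -
  have "full alpha F sG l mp r rho sig M Xi Xinf"
    unfolding full_def full_axioms_def setting_def setting_axioms_def gm_def gm_axioms_def
      flow_def part_def gauss_def gauss_axioms_def
    using alpha_cont sG_cont flow_deriv flow_init nondeg rho part_init part_order part_left
      part_right part_ratio sig00 signk M Xi_indep Xi_gauss Xinf_meas Xinf_lim
    by (auto simp: is_chol_def)
  then interpret full alpha F sG l mp r rho sig M Xi Xinf .
  show ?thesis using mat_main[OF ts] by (simp add: Cov_def)
qed


end
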